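(* Fix an initial exchange matrix $B^0$ and initial coefficients $p_1,\dots,p_n\in\mathbb P$ at $v_0$, and let $\mathcal S=\mathbb Q\mathbb P_{\mathrm{sf}}(y_1,\dots,y_n)$. For every $v\in\mathbb T^n$ and $j\in[1,n]$, writing $B_v=(b^v_{ij})$, $$\widetilde Y_{j;v}=\Big(\prod_{i=1}^n(F_{i;v}^{-b^v_{ij}})^{\mathbb P}(p_1,\dots,p_n)\Big)\Big(\prod_{i=1}^n(F_{i;v}^{b^v_{ij}})^{\mathcal S}(p_1y_1,\dots,p_ny_n)\Big)\,\mathbf y^{\mathbf c_{j;v}},$$ where $\mathbf y^{\mathbf c_{j;v}}=\prod_i y_i^{c_{ij;v}}$.
   Context: A semifield $(\mathbb P,\oplus,\cdot,1)$ satisfies the field axioms except that $\oplus$ need not have a neutral element or inverses. For $p\in\mathbb P$: $p^+=p/(p\oplus1)$, $p^-=1/(p\oplus1)$, and $p^{[\![x]\!]}=p^-,1,p^+$ according as $x<0,x=0,x>0$. $\mathbb Q_{\mathrm{sf}}(S)$ is the universal semifield of subtraction-free rational functions in the set $S$; for any semifield $\mathbb P'$ and $q_i\in\mathbb P'$ there is a unique semifield morphism sending the generators $s_i\mapsto q_i$, and the image of $f$ is written $f^{\mathbb P'}(q_1,\dots)$. $\mathbb Q\mathbb P$ is the fraction field of the group ring $\mathbb Z\mathbb P$, and $\mathbb Q\mathbb P_{\mathrm{sf}}(u_1,\dots,u_n)$ is the semifield of ratios of nonzero polynomials in the $u_i$ with coefficients nonnegative integer combinations of elements of $\mathbb P$.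 Tropical semifield $\mathrm{Trop}(z_i:i\in I)$: free abelian group on the $z_i$ with $\prod z_i^{a_i}\oplus\prod z_i^{b_i}=\prod z_i^{\min(a_i,b_i)}$. Matrix mutation: $b'_{ij}=-b_{ij}$ if $i=k$ or $j=k$, else $b_{ij}+\operatorname{sgn}(b_{ik})[b_{ik}b_{kj}]_+$. $Y$-seed mutation in a semifield: $y'_k=y_k^{-1}$, $y'_j=y_j(1\oplus y_k^{-\operatorname{sgn}(b_{kj})})^{-b_{kj}}$ ($j\ne k$). $Y$-seed with coefficients $(\mathbf y,\mathbf p,B)$ mutates by mutating $(\mathbf p,B)$ as a $Y$-seed in $\mathbb P$, $y'_k=y_k^{-1}$, $y'_j=y_j\big(p_k^{[\![b_{kj}]\!]}+p_k^{[\![-b_{kj}]\!]}y_k^{-\operatorname{sgn}(b_{kj})}\big)^{-b_{kj}}$ for $j\neq k$. Patterns are assignments of seeds to vertices of the $n$-regular edge-labeled tree $\mathbb T^n$ (initial vertex $v_0$) compatible with mutation along edges. $Y_{j;v}\in\mathbb Q_{\mathrm{sf}}(y_1,\dots,y_n)$: components of the $Y$-pattern with initial seed $((y_1,\dots,y_n),B^0)$; $B_v$ the exchange matrices. $\widetilde Y_{j;v}$: components of the $Y$-pattern with coefficients with initial seed $((y_1,\dots,y_n),(p_1,\dots,p_n),B^0)$. c-vectors: $\mathbf c_{j;v}=(c_{1j;v},\dots,c_{nj;v})\in\mathbb Z^n$ is defined by $Y_{j;v}^{\mathrm{Trop}(y_1,\dots,y_n)}(y_1,\dots,y_n)=\prod_i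 y_i^{c_{ij;v}}$. F-polynomials: a cluster pattern with coefficients in a semifield $\mathbb P$ assigns to each $v$ a triple $(\mathbf x_v,\mathbf p_v,B_v)$, with $(\mathbf p_v,B_v)$ a $Y$-pattern in $\mathbb P$ and clusters mutating by $x'_j=x_j$ ($j\ne k$), $x'_k=\big(p_k^-\prod_{b_{ik}<0}x_i^{-b_{ik}}+p_k^+\prod_{b_{ik}>0}x_i^{b_{ik}}\big)/x_k$. Take principal coefficients: $\mathbb P=\mathrm{Trop}(z_1,\dots,z_n)$, initial seed $((x_1,\dots,x_n),(z_1,\dots,z_n),B^0)$. Its cluster variables are Laurent polynomials $X^{\mathrm{FZ}}_{j;v}\in\mathbb Z[x_1^{\pm1},\dots,x_n^{\pm1};z_1,\dots,z_n]$, and $F_{j;v}(z_1,\dots,z_n):=X^{\mathrm{FZ}}_{j;v}(1,\dots,1;z_1,\dots,z_n)$; each $F_{j;v}$ is regarded as an element of $\mathbb Q_{\mathrm{sf}}(z_1,\dots,z_n)$, so that $(F^{\pm b}_{i;v})^{\mathbb P'}(q_1,\dots,q_n)$ denotes its image under $z_i\mapsto q_i$. *)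

theory Defs
  imports Main "HOL-Library.Poly_Mapping" "HOL-Library.Product_Plus"
begin

text \<open>No additive neutral element or additive inverses are required.\<close>

class semifield = comm_semiring + comm_monoid_mult + inverse +
  assumes semifield_right_inverse: "a * inverse a = 1"
  and semifield_divide: "a / b = a * inverse b"

text \<open>Semifield signatures passed explicitly (used for the free semifield of
subtraction-free expressions, tropical semifields, the ambient field of fractions).\<close>

record 'a sfops =
  sadd :: "'a \<Rightarrow> 'a \<Rightarrow> 'a"
  smul :: "'a \<Rightarrow> 'a \<Rightarrow> 'a"
  sinv :: "'a \<Rightarrow> 'a"
  sone :: 'a

definition spow :: "'a sfops \<Rightarrow> 'a \<Rightarrow> int \<Rightarrow> 'a" where
  "spow ops a m = (if 0 \<le> m then (smul ops a ^^ nat m) (sone ops)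
                 else sinv ops ((smul ops a ^^ nat (- m)) (sone ops)))"

text \<open>Product over indices 0..n-1 (the paper's 1..n).\<close>
definition sprod :: "'a sfops \<Rightarrow> nat \<Rightarrow> (nat \<Rightarrow> 'a) \<Rightarrow> 'a" where
  "sprod ops n f = foldr (\<lambda>i acc. smul ops (f i) acc) [0..<n] (sone ops)"

definition P_ops :: "'p::semifield sfops" where
  "P_ops = \<lparr>sadd = (+), smul = (*), sinv = inverse, sone = 1\<rparr>"

definition cplus :: "'a sfops \<Rightarrow> 'a \<Rightarrow> 'a" where
  "cplus ops p = smul ops p (sinv ops (sadd ops p (sone ops)))"
definition cminus :: "'a sfops \<Rightarrow> 'a \<Rightarrow> 'a" where
  "cminus ops p = sinv ops (sadd ops p (sone ops))"
definition cbr :: "'a sfops \<Rightarrow> 'a \<Rightarrow> int \<Rightarrow> 'a" where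
  "cbr ops p x = (if x < 0 then cminus ops p else if x = 0 then sone ops else cplus ops p)"

section \<open>Universal semifield Q_sf(S): subtraction-free expressions\<close>

datatype 'v sfe = V 'v | One | Add "'v sfe" "'v sfe" | Mul "'v sfe" "'v sfe" | Inv "'v sfe"

definition E_ops :: "'v sfe sfops" where
  "E_ops = \<lparr>sadd = Add, smul = Mul, sinv = Inv, sone = One\<rparr>"

primrec seval :: "'a sfops \<Rightarrow> ('v \<Rightarrow> 'a) \<Rightarrow> 'v sfe \<Rightarrow> 'a" where
  "seval ops \<rho> (V v) = \<rho> v"
| "seval ops \<rho> One = sone ops"
| "seval ops \<rho> (Add a b) = sadd ops (seval ops \<rho> a) (seval ops \<rho> b)"
| "seval ops \<rho> (Mul a b) = smul ops (seval ops \<rho> a) (seval ops \<rho> b)"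
| "seval ops \<rho> (Inv a) = sinv ops (seval ops \<rho> a)"

section \<open>Tropical semifield Trop(z_0,...) : exponent vectors, min as addition\<close>

definition Trop_ops :: "(nat \<Rightarrow> int) sfops" where
  "Trop_ops = \<lparr>sadd = (\<lambda>a b i. min (a i) (b i)), smul = (\<lambda>a b i. a i + b i),
               sinv = (\<lambda>a i. - a i), sone = (\<lambda>i. 0)\<rparr>"

definition trop_gen :: "nat \<Rightarrow> nat \<Rightarrow> int" where
  "trop_gen i = (\<lambda>l. if l = i then 1 else 0)"

definition mutB :: "nat \<Rightarrow> (nat \<Rightarrow> nat \<Rightarrow> int) \<Rightarrow> (nat \<Rightarrow> nat \<Rightarrow> int)" where
  "mutB k B = (\<lambda>i j. if i = k \<or> j = k then - B i j
                      else B i j + sgn (B i k) * max 0 (B i k * B k j))"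

definition ymut :: "'a sfops \<Rightarrow> nat \<Rightarrow> (nat \<Rightarrow> nat \<Rightarrow> int) \<Rightarrow> (nat \<Rightarrow> 'a) \<Rightarrow> (nat \<Rightarrow> 'a)" where
  "ymut ops k B y = (\<lambda>j. if j = k then sinv ops (y k)
      else smul ops (y j) (spow ops (sadd ops (sone ops) (spow ops (y k) (- sgn (B k j)))) (- B k j)))"

text \<open>Y-pattern: value at the vertex reached from v0 by the edge labels ks (in order).\<close>
definition ypat :: "'a sfops \<Rightarrow> (nat \<Rightarrow> nat \<Rightarrow> int) \<Rightarrow> (nat \<Rightarrow> 'a) \<Rightarrow> nat list
                    \<Rightarrow> (nat \<Rightarrow> 'a) \<times> (nat \<Rightarrow> nat \<Rightarrow> int)" where
  "ypat ops B0 y0 ks = foldl (\<lambda>(y, B) k. (ymut ops k B y, mutB k B)) (y0, B0) ks"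

definition Bv :: "(nat \<Rightarrow> nat \<Rightarrow> int) \<Rightarrow> nat list \<Rightarrow> (nat \<Rightarrow> nat \<Rightarrow> int)" where
  "Bv B0 ks = foldl (\<lambda>B k. mutB k B) B0 ks"

definition exchange_matrix :: "nat \<Rightarrow> (nat \<Rightarrow> nat \<Rightarrow> int) \<Rightarrow> bool" where
  "exchange_matrix n B \<longleftrightarrow> (\<exists>d :: nat \<Rightarrow> int. (\<forall>i<n. 0 < d i) \<and>
       (\<forall>i<n. \<forall>j<n. d i * B i j = - (d j * B j i)))"

text \<open>Vertices of the n-regular tree T^n = reduced words of edge labels read from v0.\<close>
definition tree_vertex :: "nat \<Rightarrow> nat list \<Rightarrow> bool" where
  "tree_vertex n ks \<longleftrightarrow> (\<forall>k\<in>set ks. k < n) \<and> (\<forall>i. Suc i < length ks \<longrightarrow> ks ! i \<noteq> ks ! Suc i)"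

definition Yuniv :: "(nat \<Rightarrow> nat \<Rightarrow> int) \<Rightarrow> nat list \<Rightarrow> nat \<Rightarrow> nat sfe" where
  "Yuniv B0 ks j = fst (ypat E_ops B0 V ks) j"

definition cvec :: "(nat \<Rightarrow> nat \<Rightarrow> int) \<Rightarrow> nat list \<Rightarrow> nat \<Rightarrow> nat \<Rightarrow> int" where
  "cvec B0 ks j i = seval Trop_ops trop_gen (Yuniv B0 ks j) i"

text \<open>Cluster variables as subtraction-free expressions; Inl i is x_i, Inr i is z_i.
A coefficient a in Trop(z) is the monomial prod z_i^(a_i).\<close>

definition zmono :: "nat \<Rightarrow> (nat \<Rightarrow> int) \<Rightarrow> (nat + nat) sfe" where
  "zmono n a = sprod E_ops n (\<lambda>i. spow E_ops (V (Inr i)) (a i))"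

definition xmut :: "nat \<Rightarrow> nat \<Rightarrow> (nat \<Rightarrow> nat \<Rightarrow> int) \<Rightarrow> (nat \<Rightarrow> nat \<Rightarrow> int)
                    \<Rightarrow> (nat \<Rightarrow> (nat + nat) sfe) \<Rightarrow> (nat \<Rightarrow> (nat + nat) sfe)" where
  "xmut n k B p x = (\<lambda>j. if j \<noteq> k then x j else
     Mul (Add (Mul (zmono n (cminus Trop_ops (p k)))
                   (sprod E_ops n (\<lambda>i. if B i k < 0 then spow E_ops (x i) (- B i k) else One)))
              (Mul (zmono n (cplus Trop_ops (p k)))
                   (sprod E_ops n (\<lambda>i. if B i k > 0 then spow E_ops (x i) (B i k) else One))))
         (Inv (x k)))"

definition cpat_principal :: "nat \<Rightarrow> (nat \<Rightarrow> nat \<Rightarrow> int) \<Rightarrow> nat list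
    \<Rightarrow> (nat \<Rightarrow> (nat + nat) sfe) \<times> (nat \<Rightarrow> nat \<Rightarrow> int) \<times> (nat \<Rightarrow> nat \<Rightarrow> int)" where
  "cpat_principal n B0 ks = foldl (\<lambda>(x, p, B) k. (xmut n k B p x, ymut Trop_ops k B p, mutB k B))
      (\<lambda>i. V (Inl i), trop_gen, B0) ks"

definition Fpoly :: "nat \<Rightarrow> (nat \<Rightarrow> nat \<Rightarrow> int) \<Rightarrow> nat list \<Rightarrow> nat \<Rightarrow> nat sfe" where
  "Fpoly n B0 ks j = seval E_ops (\<lambda>v. case v of Inl _ \<Rightarrow> One | Inr i \<Rightarrow> V i)
                        (fst (cpat_principal n B0 ks) j)"

text \<open>The multiplicative group of P, written additively, so that ZP[y_0,y_1,...]
is the monoid ring Z[P x N^(N)] (poly_mapping with convolution).\<close>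

datatype 'p mult = Mult 'p

instantiation mult :: (comm_monoid_mult) comm_monoid_add
begin
fun plus_mult :: "'a mult \<Rightarrow> 'a mult \<Rightarrow> 'a mult" where
  "plus_mult (Mult a) (Mult b) = Mult (a * b)"
definition zero_mult :: "'a mult" where "zero_mult = Mult 1"
instance
proof
  fix a b c :: "'a mult"
  show "a + b + c = a + (b + c)" by (cases a; cases b; cases c) (simp add: mult.assoc)
  show "a + b = b + a" by (cases a; cases b) (simp add: mult.commute)
  show "0 + a = a" by (cases a) (simp add: zero_mult_def)
qed
end

type_synonym 'p ZPy = "('p mult \<times> (nat \<Rightarrow>\<^sub>0 nat)) \<Rightarrow>\<^sub>0 int"

text \<open>Elements of QP(y) are represented as fractions (numerator, denominator);
equality in the fraction field is cross-multiplication.\<close>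
type_synonym 'p QPy = "'p ZPy \<times> 'p ZPy"

definition S_ops :: "'p::comm_monoid_mult QPy sfops" where
  "S_ops = \<lparr>sadd = (\<lambda>(a, b) (c, d). (a * d + c * b, b * d)),
            smul = (\<lambda>(a, b) (c, d). (a * c, b * d)),
            sinv = (\<lambda>(a, b). (b, a)), sone = (1, 1)\<rparr>"

definition qeq :: "'p::comm_monoid_mult QPy \<Rightarrow> 'p QPy \<Rightarrow> bool" where
  "qeq u w \<longleftrightarrow> fst u * snd w = fst w * snd u"

definition embP :: "'p::comm_monoid_mult \<Rightarrow> 'p QPy" where
  "embP p = (Poly_Mapping.single (Mult p, 0) 1, 1)"

definition yvar :: "nat \<Rightarrow> 'p::comm_monoid_mult QPy" where
  "yvar i = (Poly_Mapping.single (Mult 1, Poly_Mapping.single i 1) 1, 1)"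

definition ycmut :: "nat \<Rightarrow> (nat \<Rightarrow> nat \<Rightarrow> int) \<Rightarrow> (nat \<Rightarrow> 'p::semifield)
                     \<Rightarrow> (nat \<Rightarrow> 'p QPy) \<Rightarrow> (nat \<Rightarrow> 'p QPy)" where
  "ycmut k B p y = (\<lambda>j. if j = k then sinv S_ops (y k)
      else smul S_ops (y j)
        (spow S_ops (sadd S_ops (embP (cbr P_ops (p k) (B k j)))
                                (smul S_ops (embP (cbr P_ops (p k) (- B k j)))
                                            (spow S_ops (y k) (- sgn (B k j)))))
              (- B k j)))"

definition ycpat :: "(nat \<Rightarrow> nat \<Rightarrow> int) \<Rightarrow> (nat \<Rightarrow> 'p::semifield) \<Rightarrow> nat list
    \<Rightarrow> (nat \<Rightarrow> 'p QPy) \<times> (nat \<Rightarrow> 'p) \<times> (nat \<Rightarrow> nat \<Rightarrow> int)" where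
  "ycpat B0 p0 ks = foldl (\<lambda>(y, p, B) k. (ycmut k B p y, ymut P_ops k B p, mutB k B))
      (yvar, p0, B0) ks"

definition Ytilde :: "(nat \<Rightarrow> nat \<Rightarrow> int) \<Rightarrow> (nat \<Rightarrow> 'p::semifield) \<Rightarrow> nat list \<Rightarrow> nat \<Rightarrow> 'p QPy" where
  "Ytilde B0 p0 ks j = fst (ycpat B0 p0 ks) j"

end

theory Submission
  imports Defs
begin


context semifield begin
lemma sf_inv_left: "inverse a * a = 1"
  using semifield_right_inverse[of a] by (simp add: mult.commute)
lemma sf_cancel: "a * b = a * c \<Longrightarrow> b = c"
proof -
  assume "a * b = a * c"
  then have "inverse a * (a * b) = inverse a * (a * c)" by simp
  then show "b = c" by (simp add: mult.assoc[symmetric] sf_inv_left)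
qed
lemma sf_inv_unique: "a * b = 1 \<Longrightarrow> inverse a = b"
  by (rule sf_cancel[of a]) (simp add: semifield_right_inverse)
lemma sf_inv_inv[simp]: "inverse (inverse a) = a"
  by (rule sf_inv_unique) (simp add: sf_inv_left)
lemma sf_inv_mult: "inverse (a * b) = inverse a * inverse b"
  by (rule sf_inv_unique) (metis mult.assoc mult.commute mult.left_neutral semifield_right_inverse)
lemma sf_inv_one[simp]: "inverse 1 = 1"
  by (rule sf_inv_unique) simp
lemma sf_inv_pow: "inverse (a ^ k) = inverse a ^ k"
  by (induction k) (simp_all add: sf_inv_mult)
end

definition zp :: "'a::semifield \<Rightarrow> int \<Rightarrow> 'a" where
  "zp a m = (if 0 \<le> m then a ^ nat m else inverse (a ^ nat (- m)))"

lemma funpow_times_one: "(((*) a) ^^ k) (1::'a::monoid_mult) = a ^ k"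
  by (induction k) auto

lemma spow_P[simp]: "spow P_ops a m = zp a m"
  by (simp add: spow_def P_ops_def zp_def funpow_times_one)

lemma zp_diff: "zp (a::'a::semifield) (int k - int l) = a ^ k * inverse (a ^ l)"
proof (cases "l \<le> k")
  case True
  then obtain d where k: "k = l + d" using le_Suc_ex by blast
  have "a ^ k * inverse (a ^ l) = a ^ d" 
    by (simp add: k power_add mult.assoc mult.commute[of "a^l"] semifield_right_inverse)
  then show ?thesis by (simp add: zp_def k)
next
  case False
  then obtain d where l: "l = k + d" "d > 0" by (metis less_imp_add_positive not_le)
  have "a ^ k * inverse (a ^ l) = inverse (a ^ d)"
    by (simp add: l power_add sf_inv_mult mult.assoc[symmetric] semifield_right_inverse)
  then show ?thesis using l by (simp add: zp_def)
qed

lemma int_as_diff: obtains k l where "(m::int) = int k - int l"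
proof (cases "0 \<le> m")
  case True then show ?thesis using that[of "nat m" 0] by simp
next
  case False then show ?thesis using that[of 0 "nat (-m)"] by simp
qed


lemma zp_add: "zp (a::'a::semifield) (m + n) = zp a m * zp a n"
proof -
  obtain k1 l1 where m: "m = int k1 - int l1" by (rule int_as_diff)
  obtain k2 l2 where n: "n = int k2 - int l2" by (rule int_as_diff)
  have e: "m + n = int (k1 + k2) - int (l1 + l2)" using m n by simp
  have "zp a (m + n) = a ^ (k1 + k2) * inverse (a ^ (l1 + l2))" by (subst e, rule zp_diff)
  also have "\<dots> = zp a m * zp a n" unfolding m n zp_diff
    by (simp add: power_add sf_inv_mult ac_simps)
  finally show ?thesis .
qed

lemma zp_0[simp]: "zp a 0 = 1" by (simp add: zp_def)
lemma zp_1[simp]: "zp a 1 = a" by (simp add: zp_def)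
lemma zp_one_base[simp]: "zp (1::'a::semifield) m = 1" by (simp add: zp_def)

lemma zp_neg: "zp (a::'a::semifield) (- m) = inverse (zp a m)"
proof -
  obtain k l where m: "m = int k - int l" by (rule int_as_diff)
  have e: "- m = int l - int k" using m by simp
  have "zp a (- m) = a ^ l * inverse (a ^ k)" by (subst e, rule zp_diff)
  also have "\<dots> = inverse (zp a m)" unfolding m zp_diff by (simp add: sf_inv_mult ac_simps)
  finally show ?thesis .
qed

lemma zp_mult_base: "zp ((a::'a::semifield) * b) m = zp a m * zp b m"
proof -
  obtain k l where m: "m = int k - int l" by (rule int_as_diff)
  show ?thesis unfolding m zp_diff by (simp add: power_mult_distrib sf_inv_mult ac_simps)
qed

lemma zp_inv_base: "zp (inverse (a::'a::semifield)) m = inverse (zp a m)"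
  by (simp add: zp_def sf_inv_pow)

lemma zp_pow: "zp (a::'a::semifield) m ^ k = zp a (m * int k)"
  by (induction k) (simp_all add: zp_add algebra_simps)

lemma zp_zp: "zp (zp (a::'a::semifield) m) n = zp a (m * n)"
proof -
  obtain k l where n: "n = int k - int l" by (rule int_as_diff)
  show ?thesis unfolding n zp_diff zp_pow
    by (simp add: right_diff_distrib zp_add[symmetric] zp_neg[symmetric])
qed

lemma zp_nat: "zp a (int k) = a ^ k" by (simp add: zp_def)

lemma prod_zp_add: "(\<Prod>i\<in>A. zp (x i::'a::semifield) (e i + f i)) = (\<Prod>i\<in>A. zp (x i) (e i)) * (\<Prod>i\<in>A. zp (x i) (f i))"
  by (simp add: zp_add prod.distrib)

lemma prod_inverse_sf: "(\<Prod>i\<in>A. inverse (f i::'a::semifield)) = inverse (\<Prod>i\<in>A. f i)"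
  by (induction A rule: infinite_finite_induct) (simp_all add: sf_inv_mult)

lemma prod_zp_neg: "(\<Prod>i\<in>A. zp (x i::'a::semifield) (- e i)) = inverse (\<Prod>i\<in>A. zp (x i) (e i))"
  by (simp add: zp_neg prod_inverse_sf)

lemma zp_prod: "zp (\<Prod>i\<in>A. (f i::'a::semifield)) m = (\<Prod>i\<in>A. zp (f i) m)"
  by (induction A rule: infinite_finite_induct) (simp_all add: zp_mult_base)

lemma foldr_prod: "foldr (\<lambda>i acc. f i * acc) xs z = prod_list (map f xs) * (z::'a::comm_monoid_mult)"
  by (induction xs) (simp_all add: mult.assoc)

lemma sprod_P[simp]: "sprod P_ops n f = (\<Prod>i<n. (f i::'a::semifield))"
proof -
  have "prod_list (map f [0..<n]) = (\<Prod>i<n. f i)"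
    by (induction n) (simp_all add: mult.commute)
  then show ?thesis by (simp add: sprod_def P_ops_def foldr_prod)
qed


lemma seval_comp: "seval ops \<rho> (seval E_ops \<sigma> e) = seval ops (\<lambda>v. seval ops \<rho> (\<sigma> v)) e"
  by (induction e) (simp_all add: E_ops_def)

lemma seval_funpow: "seval ops \<rho> ((Mul e ^^ k) One) = (smul ops (seval ops \<rho> e) ^^ k) (sone ops)"
  by (induction k) simp_all

lemma seval_spowE: "seval ops \<rho> (spow E_ops e m) = spow ops (seval ops \<rho> e) m"
  by (simp add: spow_def E_ops_def seval_funpow)

lemma seval_foldrE: "seval ops \<rho> (foldr (\<lambda>i acc. Mul (f i) acc) xs z)
   = foldr (\<lambda>i acc. smul ops (seval ops \<rho> (f i)) acc) xs (seval ops \<rho> z)"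
  by (induction xs) simp_all

lemma seval_sprodE: "seval ops \<rho> (sprod E_ops n f) = sprod ops n (\<lambda>i. seval ops \<rho> (f i))"
  by (simp add: sprod_def E_ops_def seval_foldrE)

lemma seval_ymutE: "seval ops \<rho> (ymut E_ops k B y j) = ymut ops k B (\<lambda>j. seval ops \<rho> (y j)) j"
  by (simp add: ymut_def E_ops_def seval_spowE[unfolded E_ops_def])

lemma ypat_snoc: "ypat ops B0 y0 (ks @ [k]) =
   (ymut ops k (snd (ypat ops B0 y0 ks)) (fst (ypat ops B0 y0 ks)), mutB k (snd (ypat ops B0 y0 ks)))"
  by (simp add: ypat_def split_beta)

lemma ypat_snd: "snd (ypat ops B0 y0 ks) = Bv B0 ks"
  by (induction ks rule: rev_induct) (simp_all add: ypat_snoc, simp_all add: ypat_def Bv_def)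

lemma Bv_snoc: "Bv B0 (ks @ [k]) = mutB k (Bv B0 ks)"
  by (simp add: Bv_def)

lemma Bv_Nil[simp]: "Bv B0 [] = B0" by (simp add: Bv_def)

lemma ypat_fst_snoc: "fst (ypat ops B0 y0 (ks @ [k])) = ymut ops k (Bv B0 ks) (fst (ypat ops B0 y0 ks))"
  by (simp add: ypat_snoc ypat_snd)

lemma ypat_Nil[simp]: "ypat ops B0 y0 [] = (y0, B0)" by (simp add: ypat_def)

lemma seval_ypat: "seval ops \<rho> (fst (ypat E_ops B0 y0 ks) j) = fst (ypat ops B0 (\<lambda>j. seval ops \<rho> (y0 j)) ks) j"
proof (induction ks arbitrary: j rule: rev_induct)
  case Nil then show ?case by simp
next
  case (snoc k ks) then show ?case
    by (simp add: ypat_fst_snoc seval_ymutE)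
qed

lemma cvec_ypat: "cvec B0 ks j = fst (ypat Trop_ops B0 trop_gen ks) j"
proof -
  have "cvec B0 ks j = seval Trop_ops trop_gen (fst (ypat E_ops B0 V ks) j)"
    by (rule ext) (simp add: cvec_def Yuniv_def)
  also have "\<dots> = fst (ypat Trop_ops B0 trop_gen ks) j" by (simp add: seval_ypat)
  finally show ?thesis .
qed

lemma cvec_snoc: "cvec B0 (ks @ [k]) j = ymut Trop_ops k (Bv B0 ks) (cvec B0 ks) j"
proof -
  have e: "cvec B0 ks = fst (ypat Trop_ops B0 trop_gen ks)" by (rule ext) (simp add: cvec_ypat)
  show ?thesis by (simp add: cvec_ypat ypat_fst_snoc e)
qed

lemma cpat_snd: "snd (cpat_principal n B0 ks) = (fst (ypat Trop_ops B0 trop_gen ks), Bv B0 ks)"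
proof (induction ks rule: rev_induct)
  case Nil then show ?case by (simp add: cpat_principal_def)
next
  case (snoc k ks)
  then show ?case by (simp add: cpat_principal_def split_beta ypat_fst_snoc Bv_snoc)
qed

lemma cpat_fst_snoc: "fst (cpat_principal n B0 (ks @ [k])) =
   xmut n k (Bv B0 ks) (cvec B0 ks) (fst (cpat_principal n B0 ks))"
proof -
  have e: "cvec B0 ks = fst (ypat Trop_ops B0 trop_gen ks)" by (rule ext) (simp add: cvec_ypat)
  have "cpat_principal n B0 (ks @ [k]) = (\<lambda>(x, p, B) k. (xmut n k B p x, ymut Trop_ops k B p, mutB k B))
      (cpat_principal n B0 ks) k" by (simp add: cpat_principal_def)
  then show ?thesis using cpat_snd[of n B0 ks] e by (simp add: split_beta)
qed

lemma cpat_fst_Nil: "fst (cpat_principal n B0 []) = (\<lambda>i. V (Inl i))"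
  by (simp add: cpat_principal_def)

lemma trop_funpow: "(smul Trop_ops a ^^ k) (sone Trop_ops) = (\<lambda>i. int k * a i)"
  by (induction k) (auto simp: Trop_ops_def algebra_simps)

lemma spow_Trop: "spow Trop_ops a m = (\<lambda>i. m * a i)"
  unfolding spow_def trop_funpow by (auto simp: Trop_ops_def)

lemma ymut_Trop: "ymut Trop_ops k B c j i =
   (if j = k then - c k i else c j i + (- B k j) * min 0 (- sgn (B k j) * c k i))"
  by (simp add: ymut_def spow_Trop) (simp add: Trop_ops_def)

lemma cminus_Trop: "cminus Trop_ops a = (\<lambda>i. - min (a i) 0)"
  by (simp add: cminus_def Trop_ops_def)

lemma cplus_Trop: "cplus Trop_ops a = (\<lambda>i. a i - min (a i) 0)"
  by (simp add: cplus_def Trop_ops_def)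

lemma seval_zmono: "seval P_ops \<rho> (zmono n a) = (\<Prod>i<n. zp (\<rho> (Inr i) :: 'a::semifield) (a i))"
  by (simp add: zmono_def seval_sprodE seval_spowE)

lemma ymut_P: "ymut P_ops k B y j = (if j = k then inverse (y k)
   else y j * zp (1 + zp (y k) (- sgn (B k j))) (- B k j))"
  by (simp add: ymut_def) (simp add: P_ops_def)

lemma cbr_P: "cbr P_ops p x = (if x < 0 then inverse (p + 1) else if x = 0 then 1 else p * inverse (p + 1))"
  by (simp add: cbr_def cminus_def cplus_def P_ops_def)


definition ssym :: "nat \<Rightarrow> (nat \<Rightarrow> int) \<Rightarrow> (nat \<Rightarrow> nat \<Rightarrow> int) \<Rightarrow> bool" where
  "ssym n d B \<longleftrightarrow> (\<forall>i<n. 0 < d i) \<and> (\<forall>i<n. \<forall>j<n. d i * B i j = - (d j * B j i))"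

lemma ssym_diag: "ssym n d B \<Longrightarrow> i < n \<Longrightarrow> B i i = 0"
proof -
  assume a: "ssym n d B" "i < n"
  then have h: "d i * B i i = - (d i * B i i)" "0 < d i" unfolding ssym_def by blast+
  from h(1) have "d i * B i i = 0" by linarith
  with h(2) show ?thesis by simp
qed

lemma key_mut:
  fixes di dj dk a b a' b' :: int
  assumes "0 < di" "0 < dj" "0 < dk" and e1: "di * a = - (dk * a')" and e2: "dj * b' = - (dk * b)"
  shows "di * (sgn a * max 0 (a * b)) = - (dj * (sgn b' * max 0 (b' * a')))"
proof -
  have sA: "sgn a' = - sgn a"
  proof -
    have "sgn a' = sgn (dk * a')" using assms(3) by (simp add: sgn_mult)
    also have "dk * a' = - (di * a)" using e1 by simp
    also have "sgn (- (di * a)) = - sgn a" using assms(1) by (simp add: sgn_mult)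
    finally show ?thesis .
  qed
  have sB: "sgn b' = - sgn b"
  proof -
    have "sgn b' = sgn (dj * b')" using assms(2) by (simp add: sgn_mult)
    also have "dj * b' = - (dk * b)" using e2 by simp
    also have "sgn (- (dk * b)) = - sgn b" using assms(3) by (simp add: sgn_mult)
    finally show ?thesis .
  qed
  have X: "di * a * b = dj * b' * a'"
  proof -
    have "di * a * b = - (dk * a') * b" using e1 by simp
    moreover have "dj * b' * a' = - (dk * b) * a'" using e2 by simp
    ultimately show ?thesis by simp
  qed
  have a3: "a > 0 \<and> a' < 0 \<or> a = 0 \<and> a' = 0 \<or> a < 0 \<and> a' > 0" using sA
    by (simp add: sgn_if split: if_splits)
  have b3: "b > 0 \<and> b' < 0 \<or> b = 0 \<and> b' = 0 \<or> b < 0 \<and> b' > 0" using sB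
    by (simp add: sgn_if split: if_splits)
  show ?thesis
    using a3 b3
  proof (elim disjE conjE)
    assume h: "0 < a" "a' < 0" "0 < b" "b' < 0"
    then have "0 < a * b" "0 < b' * a'" by (simp_all add: mult_pos_pos mult_neg_neg)
    then show ?thesis using h X by (simp add: algebra_simps)
  next
    assume h: "a < 0" "a' > 0" "b < 0" "b' > 0"
    then have "0 < a * b" "0 < b' * a'" by (simp_all add: mult_pos_pos mult_neg_neg)
    then show ?thesis using h X by (simp add: algebra_simps)
  next
    assume h: "0 < a" "a' < 0" "b < 0" "b' > 0"
    then have "a * b \<le> 0" "b' * a' \<le> 0" by (simp_all add: mult_pos_neg mult_neg_pos less_imp_le)
    then show ?thesis by (simp add: max_absorb1)
  next
    assume h: "a < 0" "a' > 0" "0 < b" "b' < 0"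
    then have "a * b \<le> 0" "b' * a' \<le> 0" by (simp_all add: mult_pos_neg mult_neg_pos less_imp_le)
    then show ?thesis by (simp add: max_absorb1)
  qed simp_all
qed

lemma ssym_mutB: assumes "ssym n d B" "k < n" shows "ssym n d (mutB k B)"
  unfolding ssym_def
proof (intro conjI allI impI)
  fix i assume "i < n" then show "0 < d i" using assms unfolding ssym_def by blast
next
  fix i j assume ij: "i < n" "j < n"
  have S: "\<And>i j. i < n \<Longrightarrow> j < n \<Longrightarrow> d i * B i j = - (d j * B j i)" "\<And>i. i < n \<Longrightarrow> 0 < d i"
    using assms unfolding ssym_def by blast+
  show "d i * mutB k B i j = - (d j * mutB k B j i)"
  proof (cases "i = k \<or> j = k")
    case True then show ?thesis using S(1)[OF ij] by (auto simp: mutB_def)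
  next
    case False
    have "d i * (sgn (B i k) * max 0 (B i k * B k j)) = - (d j * (sgn (B j k) * max 0 (B j k * B k i)))"
      by (rule key_mut[OF S(2)[OF ij(1)] S(2)[OF ij(2)] S(2)[OF assms(2)] S(1)[OF ij(1) assms(2)]
              S(1)[OF ij(2) assms(2)]])
    moreover have "d i * B i j = - (d j * B j i)" using S(1)[OF ij] .
    ultimately show ?thesis using False by (simp add: mutB_def algebra_simps)
  qed
qed

lemma ssym_Bv: "ssym n d B0 \<Longrightarrow> \<forall>k\<in>set ks. k < n \<Longrightarrow> ssym n d (Bv B0 ks)"
  by (induction ks rule: rev_induct) (auto simp: Bv_snoc intro: ssym_mutB)


lemma P_ops_simps[simp]: "sadd P_ops = (+)" "smul P_ops = (*)" "sinv P_ops = inverse" "sone P_ops = 1"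
  by (simp_all add: P_ops_def)

definition Fv :: "nat \<Rightarrow> (nat \<Rightarrow> nat \<Rightarrow> int) \<Rightarrow> nat list \<Rightarrow> (nat \<Rightarrow> 'a::semifield) \<Rightarrow> nat \<Rightarrow> 'a" where
  "Fv n B0 ks y i = seval P_ops (\<lambda>v. case v of Inl _ \<Rightarrow> 1 | Inr l \<Rightarrow> y l) (fst (cpat_principal n B0 ks) i)"

lemma Fpoly_Fv: "seval P_ops y (Fpoly n B0 ks i) = Fv n B0 ks y i"
proof -
  have e: "(\<lambda>v. seval P_ops y (case v of Inl _ \<Rightarrow> One | Inr i \<Rightarrow> V i)) = (\<lambda>v. case v of Inl _ \<Rightarrow> 1 | Inr l \<Rightarrow> y l)"
    by (rule ext) (simp split: sum.split)
  show ?thesis by (simp add: Fpoly_def seval_comp e Fv_def)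
qed

definition MM :: "nat \<Rightarrow> (nat \<Rightarrow> 'a::semifield) \<Rightarrow> (nat \<Rightarrow> 'a) \<Rightarrow> (nat \<Rightarrow> int) \<Rightarrow> (nat \<Rightarrow> int) \<Rightarrow> 'a" where
  "MM n y F e f = (\<Prod>i<n. zp (y i) (e i)) * (\<Prod>i<n. zp (F i) (f i))"

lemma MM_mult: "MM n y F e f * MM n y F e' f' = MM n y F (\<lambda>i. e i + e' i) (\<lambda>i. f i + f' i)"
  unfolding MM_def prod_zp_add by (simp add: ac_simps)

lemma MM_inv: "inverse (MM n y F e f) = MM n y F (\<lambda>i. - e i) (\<lambda>i. - f i)"
  unfolding MM_def prod_zp_neg by (simp add: sf_inv_mult)

lemma MM_zp: "zp (MM n y F e f) m = MM n y F (\<lambda>i. m * e i) (\<lambda>i. m * f i)"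
  unfolding MM_def by (simp add: zp_mult_base zp_prod zp_zp mult.commute)

lemma MM_cong: "(\<And>i. i < n \<Longrightarrow> e i = e' i) \<Longrightarrow> (\<And>i. i < n \<Longrightarrow> f i = f' i) \<Longrightarrow> MM n y F e f = MM n y F e' f'"
  unfolding MM_def by (intro arg_cong2[where f="(*)"] prod.cong) auto

lemma prod_single_zp: "(k::nat) < n \<Longrightarrow> (\<Prod>i<n. zp (F i::'a::semifield) (if i = k then m else 0)) = zp (F k) m"
proof -
  assume k: "k < n"
  have "(\<Prod>i<n. zp (F i) (if i = k then m else 0)) = zp (F k) (if k = k then m else 0) *
     (\<Prod>i\<in>{..<n} - {k}. zp (F i) (if i = k then m else 0))"
    by (rule prod.remove) (use k in auto)
  also have "(\<Prod>i\<in>{..<n} - {k}. zp (F i) (if i = k then m else 0)) = 1"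
    by (rule prod.neutral) auto
  finally show ?thesis by simp
qed

lemma MM_single: "k < n \<Longrightarrow> zp (F k) m = MM n y F (\<lambda>_. 0) (\<lambda>i. if i = k then m else 0)"
  unfolding MM_def by (simp add: prod_single_zp)

lemma MM_upd: "k < n \<Longrightarrow> MM n y (F(k := w)) e f = zp w (f k) * MM n y F e (\<lambda>i. if i = k then 0 else f i)"
proof -
  assume k: "k < n"
  have "(\<Prod>i<n. zp ((F(k := w)) i) (f i)) = zp ((F(k := w)) k) (f k) * (\<Prod>i\<in>{..<n} - {k}. zp ((F(k := w)) i) (f i))"
    by (rule prod.remove) (use k in auto)
  also have "(\<Prod>i\<in>{..<n} - {k}. zp ((F(k := w)) i) (f i)) = (\<Prod>i\<in>{..<n} - {k}. zp (F i) (if i = k then 0 else f i))"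
    by (rule prod.cong) auto
  also have "\<dots> = zp (F k) (if k = k then 0 else f k) * \<dots>" by simp
  also have "\<dots> = (\<Prod>i<n. zp (F i) (if i = k then 0 else f i))"
    by (rule prod.remove[symmetric]) (use k in auto)
  finally show ?thesis unfolding MM_def by (simp add: ac_simps)
qed

lemma seval_if_spow: "seval ops \<rho> (if c then spow E_ops e m else One) = (if c then spow ops (seval ops \<rho> e) m else sone ops)"
  by (simp add: seval_spowE)

lemma Fv_snoc: "Fv n B0 (ks @ [k]) y = (Fv n B0 ks y)(k :=
   ((\<Prod>i<n. zp (y i) (cminus Trop_ops (cvec B0 ks k) i)) *
      (\<Prod>i<n. if Bv B0 ks i k < 0 then zp (Fv n B0 ks y i) (- Bv B0 ks i k) else 1) +
    (\<Prod>i<n. zp (y i) (cplus Trop_ops (cvec B0 ks k) i)) *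
      (\<Prod>i<n. if Bv B0 ks i k > 0 then zp (Fv n B0 ks y i) (Bv B0 ks i k) else 1))
   * inverse (Fv n B0 ks y k))"
proof -
  have h: "\<And>i. seval P_ops (\<lambda>v. case v of Inl _ \<Rightarrow> 1 | Inr l \<Rightarrow> y l) (fst (cpat_principal n B0 ks) i) = Fv n B0 ks y i"
    by (simp add: Fv_def)
  show ?thesis
    by (rule ext) (simp add: Fv_def[of n B0 "ks @ [k]"] cpat_fst_snoc xmut_def seval_zmono seval_sprodE
        seval_if_spow seval_spowE h cong: if_cong)
qed


lemma ar1: "(b::int) > 0 \<Longrightarrow> b * (x - min x 0) = - b * min 0 (- x)"
  by (cases "x \<ge> 0") (simp_all add: min_def)
lemma ar2: "(b::int) < 0 \<Longrightarrow> b * (- min x 0) = - b * min 0 x"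
  by (cases "x \<ge> 0") (simp_all add: min_def)
lemma ar3: "(b::int) > 0 \<Longrightarrow> b * max a 0 = sgn a * max 0 (a * b)"
proof (cases a "0::int" rule: linorder_cases)
  case greater then show "b > 0 \<Longrightarrow> ?thesis" by (simp add: mult_pos_pos max_def mult.commute)
next
  case less then show "b > 0 \<Longrightarrow> ?thesis" using mult_neg_pos[of a b] by (simp add: max_def)
qed simp
lemma ar4: "(b::int) < 0 \<Longrightarrow> b * max (- a) 0 = sgn a * max 0 (a * b)"
proof (cases a "0::int" rule: linorder_cases)
  case greater then show "b < 0 \<Longrightarrow> ?thesis" using mult_pos_neg[of a b] by (simp add: max_def)
next
  case less then show "b < 0 \<Longrightarrow> ?thesis" using mult_neg_neg[of a b] by (simp add: max_def mult.commute)
qed simp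

lemma max_split_neg: "zp (x::'a::semifield) (max (- m) 0) = (if m < 0 then zp x (- m) else 1)"
  by (simp add: max_def)
lemma max_split_pos: "zp (x::'a::semifield) (max m 0) = (if m > 0 then zp x m else 1)"
  by (simp add: max_def)

lemma sep_formula:
  fixes y :: "nat \<Rightarrow> 'a::semifield"
  assumes ss: "ssym n d B0" and ks: "\<forall>k\<in>set ks. k < n"
  shows "\<forall>j<n. fst (ypat P_ops B0 y ks) j = MM n y (Fv n B0 ks y) (cvec B0 ks j) (\<lambda>i. Bv B0 ks i j)"
  using ks
proof (induction ks rule: rev_induct)
  case Nil
  show ?case
  proof (intro allI impI)
    fix j assume j: "j < n"
    have F1: "Fv n B0 [] y = (\<lambda>i. 1)" by (rule ext) (simp add: Fv_def cpat_fst_Nil)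
    have c0: "cvec B0 [] j = trop_gen j" by (simp add: cvec_ypat)
    show "fst (ypat P_ops B0 y []) j = MM n y (Fv n B0 [] y) (cvec B0 [] j) (\<lambda>i. Bv B0 [] i j)"
      unfolding F1 c0 MM_def using prod_single_zp[OF j, of y 1] by (simp add: trop_gen_def)
  qed
next
  case (snoc k ks)
  have kn: "k < n" and ks': "\<forall>k\<in>set ks. k < n" using snoc.prems by auto
  note IH = snoc.IH[OF ks']
  define B where "B = Bv B0 ks"
  define c where "c = cvec B0 ks"
  define F where "F = Fv n B0 ks y"
  define Y where "Y = fst (ypat P_ops B0 y ks)"
  have IH': "\<And>j. j < n \<Longrightarrow> Y j = MM n y F (c j) (\<lambda>i. B i j)"
    using IH unfolding Y_def F_def c_def B_def by blast
  have Bkk: "B k k = 0" using ssym_diag[OF ssym_Bv[OF ss ks'] kn] unfolding B_def .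
  define Nm where "Nm = MM n y F (\<lambda>i. - min (c k i) 0) (\<lambda>i. max (- B i k) 0)"
  define Np where "Np = MM n y F (\<lambda>i. c k i - min (c k i) 0) (\<lambda>i. max (B i k) 0)"
  define Fk where "Fk = (Nm + Np) * inverse (F k)"
  have FS: "Fv n B0 (ks @ [k]) y = F(k := Fk)"
    unfolding Fv_snoc Fk_def Nm_def Np_def MM_def F_def[symmetric] c_def[symmetric] B_def[symmetric]
      cminus_Trop cplus_Trop max_split_neg max_split_pos by simp
  have Yk: "Y k = Np * inverse Nm"
    unfolding IH'[OF kn] Np_def Nm_def MM_inv MM_mult
    by (rule MM_cong) (simp_all add: max_def)
  have FkF: "Fk * F k = Nm + Np"
    unfolding Fk_def mult.assoc sf_inv_left by simp
  have Y': "fst (ypat P_ops B0 y (ks @ [k])) = ymut P_ops k B Y"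
    unfolding ypat_fst_snoc B_def Y_def ..
  have c': "\<And>j. cvec B0 (ks @ [k]) j = ymut Trop_ops k B c j"
    unfolding cvec_snoc B_def c_def ..
  have B': "Bv B0 (ks @ [k]) = mutB k B" unfolding Bv_snoc B_def ..
  show ?case
  proof (intro allI impI)
    fix j assume jn: "j < n"
    have RHS: "MM n y (Fv n B0 (ks @ [k]) y) (cvec B0 (ks @ [k]) j) (\<lambda>i. Bv B0 (ks @ [k]) i j)
       = zp Fk (mutB k B k j) * MM n y F (ymut Trop_ops k B c j) (\<lambda>i. if i = k then 0 else mutB k B i j)"
      unfolding FS c' B' MM_upd[OF kn] ..
    show "fst (ypat P_ops B0 y (ks @ [k])) j = MM n y (Fv n B0 (ks @ [k]) y) (cvec B0 (ks @ [k]) j) (\<lambda>i. Bv B0 (ks @ [k]) i j)"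
    proof (cases "j = k")
      case True
      have "fst (ypat P_ops B0 y (ks @ [k])) j = inverse (Y k)" unfolding Y' True by (simp add: ymut_P)
      also have "\<dots> = MM n y F (\<lambda>i. - c k i) (\<lambda>i. - B i k)" unfolding IH'[OF kn] MM_inv ..
      also have "\<dots> = MM n y F (ymut Trop_ops k B c j) (\<lambda>i. if i = k then 0 else mutB k B i j)"
        by (rule MM_cong) (auto simp: True ymut_Trop mutB_def Bkk)
      also have "\<dots> = zp Fk (mutB k B k j) * \<dots>" by (simp add: True mutB_def Bkk)
      finally show ?thesis unfolding RHS .
    next
      case False
      define b where "b = B k j"
      have LHS: "fst (ypat P_ops B0 y (ks @ [k])) j = Y j * zp (1 + zp (Y k) (- sgn b)) (- b)"
        unfolding Y' using False by (simp add: ymut_P b_def)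
      have mkj: "mutB k B k j = - b" by (simp add: mutB_def b_def)
      consider "b > 0" | "b < 0" | "b = 0" by linarith
      then show ?thesis
      proof cases
        case 1
        have "1 + zp (Y k) (- sgn b) = Fk * F k * inverse Np"
        proof -
          have "zp (Y k) (- sgn b) = Nm * inverse Np" using 1 by (simp add: Yk zp_neg sf_inv_mult mult.commute)
          moreover have "(Nm + Np) * inverse Np = 1 + Nm * inverse Np"
            by (simp add: distrib_right semifield_right_inverse add.commute)
          ultimately show ?thesis using FkF by simp
        qed
        then have "zp (1 + zp (Y k) (- sgn b)) (- b) = zp Fk (- b) * (zp (F k) (- b) * zp Np b)"
          by (simp add: zp_mult_base zp_inv_base zp_neg mult.assoc sf_inv_mult)
        also have "zp (F k) (- b) * zp Np b = MM n y F (\<lambda>i. b * (c k i - min (c k i) 0))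
                 (\<lambda>i. (if i = k then - b else 0) + b * max (B i k) 0)"
          unfolding MM_single[OF kn, of F "- b" y] Np_def MM_zp MM_mult by simp
        finally have X: "zp (1 + zp (Y k) (- sgn b)) (- b) = zp Fk (- b) * MM n y F (\<lambda>i. b * (c k i - min (c k i) 0))
                 (\<lambda>i. (if i = k then - b else 0) + b * max (B i k) 0)" .
        have "fst (ypat P_ops B0 y (ks @ [k])) j = zp Fk (- b) * (MM n y F (c j) (\<lambda>i. B i j) * MM n y F (\<lambda>i. b * (c k i - min (c k i) 0))
                 (\<lambda>i. (if i = k then - b else 0) + b * max (B i k) 0))"
          unfolding LHS IH'[OF jn] X by (rule mult.left_commute)
        also have "\<dots> = zp Fk (- b) * MM n y F (\<lambda>i. c j i + b * (c k i - min (c k i) 0))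
                 (\<lambda>i. B i j + ((if i = k then - b else 0) + b * max (B i k) 0))"
          by (simp only: MM_mult)
        also have "\<dots> = zp Fk (mutB k B k j) * MM n y F (ymut Trop_ops k B c j) (\<lambda>i. if i = k then 0 else mutB k B i j)"
          unfolding mkj
        proof (rule arg_cong[where f="(*) _"], rule MM_cong)
          fix i show "c j i + b * (c k i - min (c k i) 0) = ymut Trop_ops k B c j i"
            using False 1 by (simp add: ymut_Trop b_def[symmetric] ar1)
        next
          fix i assume "i < n"
          show "B i j + ((if i = k then - b else 0) + b * max (B i k) 0) = (if i = k then 0 else mutB k B i j)"
            using False 1 by (auto simp: mutB_def Bkk b_def[symmetric] ar3)
        qed
        finally show ?thesis unfolding RHS .
      next
        case 2
        have "1 + zp (Y k) (- sgn b) = Fk * F k * inverse Nm"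
        proof -
          have "zp (Y k) (- sgn b) = Np * inverse Nm" using 2 by (simp add: Yk)
          moreover have "(Nm + Np) * inverse Nm = 1 + Np * inverse Nm"
            by (simp add: distrib_right semifield_right_inverse)
          ultimately show ?thesis using FkF by simp
        qed
        then have "zp (1 + zp (Y k) (- sgn b)) (- b) = zp Fk (- b) * (zp (F k) (- b) * zp Nm b)"
          by (simp add: zp_mult_base zp_inv_base zp_neg mult.assoc sf_inv_mult)
        also have "zp (F k) (- b) * zp Nm b = MM n y F (\<lambda>i. b * (- min (c k i) 0))
                 (\<lambda>i. (if i = k then - b else 0) + b * max (- B i k) 0)"
          unfolding MM_single[OF kn, of F "- b" y] Nm_def MM_zp MM_mult by simp
        finally have X: "zp (1 + zp (Y k) (- sgn b)) (- b) = zp Fk (- b) * MM n y F (\<lambda>i. b * (- min (c k i) 0))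
                 (\<lambda>i. (if i = k then - b else 0) + b * max (- B i k) 0)" .
        have "fst (ypat P_ops B0 y (ks @ [k])) j = zp Fk (- b) * (MM n y F (c j) (\<lambda>i. B i j) * MM n y F (\<lambda>i. b * (- min (c k i) 0))
                 (\<lambda>i. (if i = k then - b else 0) + b * max (- B i k) 0))"
          unfolding LHS IH'[OF jn] X by (rule mult.left_commute)
        also have "\<dots> = zp Fk (- b) * MM n y F (\<lambda>i. c j i + b * (- min (c k i) 0))
                 (\<lambda>i. B i j + ((if i = k then - b else 0) + b * max (- B i k) 0))"
          by (simp only: MM_mult)
        also have "\<dots> = zp Fk (mutB k B k j) * MM n y F (ymut Trop_ops k B c j) (\<lambda>i. if i = k then 0 else mutB k B i j)"
          unfolding mkj
        proof (rule arg_cong[where f="(*) _"], rule MM_cong)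
          fix i show "c j i + b * (- min (c k i) 0) = ymut Trop_ops k B c j i"
            using False 2 by (simp add: ymut_Trop b_def[symmetric] ar2)
        next
          fix i assume "i < n"
          show "B i j + ((if i = k then - b else 0) + b * max (- B i k) 0) = (if i = k then 0 else mutB k B i j)"
            using False 2 by (auto simp: mutB_def Bkk b_def[symmetric] ar4)
        qed
        finally show ?thesis unfolding RHS .
      next
        case 3
        have "fst (ypat P_ops B0 y (ks @ [k])) j = MM n y F (c j) (\<lambda>i. B i j)"
          unfolding LHS IH'[OF jn] 3 by simp
        also have "\<dots> = zp Fk (mutB k B k j) * MM n y F (ymut Trop_ops k B c j) (\<lambda>i. if i = k then 0 else mutB k B i j)"
          unfolding mkj 3
        proof (simp, rule MM_cong)
          fix i show "c j i = ymut Trop_ops k B c j i"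
            using False 3 by (simp add: ymut_Trop b_def[symmetric])
        next
          fix i assume "i < n"
          show "B i j = (if i = k then 0 else mutB k B i j)"
            using False 3 by (auto simp: mutB_def b_def[symmetric])
        qed
        finally show ?thesis unfolding RHS .
      qed
    qed
  qed
qed


section \<open>Torsion-freeness of semifields\<close>

fun gsum :: "'a::semifield \<Rightarrow> nat \<Rightarrow> 'a" where
  "gsum x 0 = x"
| "gsum x (Suc m) = gsum x m + x ^ Suc (Suc m)"

lemma gsum_step: "x + x * gsum x m = gsum x (Suc m)"
proof (induction m)
  case 0 then show ?case by (simp add: power2_eq_square)
next
  case (Suc m)
  have "x + x * gsum x (Suc m) = (x + x * gsum x m) + x ^ Suc (Suc (Suc m))"
    by (simp add: distrib_left add.assoc)
  then show ?case using Suc by simp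
qed

lemma sf_root_one: assumes "(x::'a::semifield) ^ Suc k = 1" shows "x = 1"
proof (cases k)
  case 0 then show ?thesis using assms by simp
next
  case (Suc m)
  define S where "S = 1 + gsum x m"
  have "x * S = gsum x (Suc m)" unfolding S_def using gsum_step[of x m] by (simp add: distrib_left)
  also have "\<dots> = gsum x m + 1" using assms Suc by simp
  also have "\<dots> = 1 * S" unfolding S_def by (simp add: add.commute)
  finally have "S * x = S * 1" by (simp add: mult.commute)
  then show ?thesis by (rule sf_cancel)
qed

lemma sf_pow_inj: assumes "(a::'a::semifield) ^ Suc k = b ^ Suc k" shows "a = b"
proof -
  have "(a * inverse b) ^ Suc k = 1"
    by (simp only: power_mult_distrib sf_inv_pow[symmetric] assms semifield_right_inverse)
  then have "a * inverse b = 1" by (rule sf_root_one)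
  then have "a * inverse b * b = b" by simp
  then show ?thesis by (simp add: mult.assoc sf_inv_left)
qed

section \<open>Orderability of cancellative torsion-free commutative monoids\<close>

primrec nsm :: "nat \<Rightarrow> 'm::comm_monoid_add \<Rightarrow> 'm" where
  "nsm 0 x = 0"
| "nsm (Suc k) x = x + nsm k x"

lemma nsm_add: "nsm k (x + y) = nsm k x + nsm k y"
  by (induction k) (simp_all add: ac_simps)

lemma nsm_plus: "nsm (k + l) x = nsm k x + nsm l x"
  by (induction k) (simp_all add: ac_simps)

definition good :: "('m::comm_monoid_add \<times> 'm) set \<Rightarrow> bool" where
  "good r \<longleftrightarrow> (\<forall>x. (x, x) \<notin> r) \<and> trans r \<and> (\<forall>x y z. (x, y) \<in> r \<longrightarrow> (x + z, y + z) \<in> r)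
     \<and> (\<forall>x y z. (x + z, y + z) \<in> r \<longrightarrow> (x, y) \<in> r)"

lemma good_chain: assumes C: "C \<in> chains {r. good r}" shows "good (\<Union>C)"
  unfolding good_def
proof (intro conjI)
  have G: "\<And>r. r \<in> C \<Longrightarrow> good r" using C chainsD2 by blast
  show "\<forall>x. (x, x) \<notin> \<Union>C" using G unfolding good_def by blast
  show "trans (\<Union>C)"
  proof (rule transI)
    fix x y z assume "(x, y) \<in> \<Union>C" "(y, z) \<in> \<Union>C"
    then obtain r1 r2 where r: "r1 \<in> C" "r2 \<in> C" "(x, y) \<in> r1" "(y, z) \<in> r2" by blast
    from chainsD[OF C r(1,2)] show "(x, z) \<in> \<Union>C"
    proof
      assume "r1 \<subseteq> r2" then show ?thesis using r G[OF r(2)] unfolding good_def trans_def by blast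
    next
      assume "r2 \<subseteq> r1" then show ?thesis using r G[OF r(1)] unfolding good_def trans_def by blast
    qed
  qed
  show "\<forall>x y z. (x, y) \<in> \<Union>C \<longrightarrow> (x + z, y + z) \<in> \<Union>C" using G unfolding good_def by blast
  show "\<forall>x y z. (x + z, y + z) \<in> \<Union>C \<longrightarrow> (x, y) \<in> \<Union>C" using G unfolding good_def by blast
qed

lemma good_exists_max: "\<exists>r. good r \<and> (\<forall>r'. good r' \<and> r \<subseteq> r' \<longrightarrow> r' = r)"
proof -
  have "\<forall>C\<in>chains {r::('m::comm_monoid_add \<times> 'm) set. good r}. \<Union>C \<in> {r. good r}"
    using good_chain by blast
  from Zorn_Lemma[OF this] show ?thesis by blast
qed

lemma good_scale: assumes g: "good r" and uv: "(u, v) \<in> r" shows "(nsm (Suc m) u, nsm (Suc m) v) \<in> r"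
proof (induction m)
  case 0 then show ?case using uv by simp
next
  case (Suc m)
  have t: "(x + z, y + z) \<in> r" if "(x, y) \<in> r" for x y z using g that unfolding good_def by blast
  have "(u + nsm (Suc m) u, v + nsm (Suc m) u) \<in> r" using t[OF uv] .
  moreover have "(v + nsm (Suc m) u, v + nsm (Suc m) v) \<in> r"
    using t[OF Suc, of v] by (simp add: add.commute)
  ultimately show ?case using g unfolding good_def trans_def by (metis nsm.simps(2))
qed

definition ext_rel :: "('m::comm_monoid_add \<times> 'm) set \<Rightarrow> 'm \<Rightarrow> 'm \<Rightarrow> ('m \<times> 'm) set" where
  "ext_rel r a b = {(x, y). \<exists>k. (x + nsm k b, y + nsm k a) \<in> r} \<union> {(x, y). \<exists>k. x + nsm (Suc k) b = y + nsm (Suc k) a}"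

locale ctf =
  assumes canc: "\<And>a b c :: 'm::comm_monoid_add. a + c = b + c \<Longrightarrow> a = b"
    and tf: "\<And>(a::'m) b k. nsm (Suc k) a = nsm (Suc k) b \<Longrightarrow> a = b"
begin

lemma ext_good:
  assumes g: "good r" and nk: "\<not> (\<exists>k. (nsm (Suc k) b, nsm (Suc k) (a::'m)) \<in> r)" and ab: "a \<noteq> b"
  shows "good (ext_rel r a b)"
proof -
  have t: "\<And>x y z. (x, y) \<in> r \<Longrightarrow> (x + z, y + z) \<in> r" and c: "\<And>x y z. (x + z, y + z) \<in> r \<Longrightarrow> (x, y) \<in> r"
    and tr: "\<And>x y z. (x, y) \<in> r \<Longrightarrow> (y, z) \<in> r \<Longrightarrow> (x, z) \<in> r" and irr: "\<And>x. (x, x) \<notin> r"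
    using g unfolding good_def trans_def by blast+
  show ?thesis unfolding good_def
  proof (intro conjI allI impI)
    fix x
    show "(x, x) \<notin> ext_rel r a b"
    proof
      assume "(x, x) \<in> ext_rel r a b"
      then consider k where "(x + nsm k b, x + nsm k a) \<in> r" | k where "x + nsm (Suc k) b = x + nsm (Suc k) a"
        unfolding ext_rel_def by blast
      then show False
      proof cases
        case 1
        then have "(nsm k b, nsm k a) \<in> r" using c[of "nsm k b" x "nsm k a"] by (simp add: add.commute)
        then show False using nk irr by (cases k) auto
      next
        case 2
        then have "nsm (Suc k) b = nsm (Suc k) a" using canc[of "nsm (Suc k) b" x "nsm (Suc k) a"]
          by (simp add: add.commute)
        then show False using tf ab by metis
      qed
    qed
  next
    show "trans (ext_rel r a b)"
    proof (rule transI)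
      fix x y z assume xy: "(x, y) \<in> ext_rel r a b" and yz: "(y, z) \<in> ext_rel r a b"
      have le: "\<exists>k. (x + nsm k b = y + nsm k a \<and> k > 0) \<or> (x + nsm k b, y + nsm k a) \<in> r"
        using xy unfolding ext_rel_def by blast
      have le2: "\<exists>k. (y + nsm k b = z + nsm k a \<and> k > 0) \<or> (y + nsm k b, z + nsm k a) \<in> r"
        using yz unfolding ext_rel_def by blast
      obtain k where k: "(x + nsm k b = y + nsm k a \<and> k > 0) \<or> (x + nsm k b, y + nsm k a) \<in> r" using le by blast
      obtain l where l: "(y + nsm l b = z + nsm l a \<and> l > 0) \<or> (y + nsm l b, z + nsm l a) \<in> r" using le2 by blast
      have e1: "x + nsm (k + l) b = (x + nsm k b) + nsm l b" by (simp add: nsm_plus add.assoc)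
      have e2: "(y + nsm k a) + nsm l b = (y + nsm l b) + nsm k a" by (simp add: ac_simps)
      have e3: "(z + nsm l a) + nsm k a = z + nsm (k + l) a" by (simp add: nsm_plus ac_simps)
      from k l show "(x, z) \<in> ext_rel r a b"
      proof (elim disjE conjE)
        assume h: "x + nsm k b = y + nsm k a" "0 < k" "y + nsm l b = z + nsm l a" "0 < l"
        then have "x + nsm (k + l) b = z + nsm (k + l) a" using e1 e2 e3 by simp
        moreover obtain m where "k + l = Suc m" using h(2) by (cases "k + l") auto
        ultimately show ?thesis unfolding ext_rel_def by auto
      next
        assume h: "x + nsm k b = y + nsm k a" "(y + nsm l b, z + nsm l a) \<in> r"
        have "(x + nsm (k + l) b, z + nsm (k + l) a) \<in> r"
          using t[OF h(2), of "nsm k a"] e1 e2 e3 h(1) by simp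
        then show ?thesis unfolding ext_rel_def by auto
      next
        assume h: "(x + nsm k b, y + nsm k a) \<in> r" "y + nsm l b = z + nsm l a"
        have "(x + nsm (k + l) b, z + nsm (k + l) a) \<in> r"
          using t[OF h(1), of "nsm l b"] e1 e2 e3 h(2) by simp
        then show ?thesis unfolding ext_rel_def by auto
      next
        assume h: "(x + nsm k b, y + nsm k a) \<in> r" "(y + nsm l b, z + nsm l a) \<in> r"
        have "(x + nsm (k + l) b, (y + nsm l b) + nsm k a) \<in> r"
          using t[OF h(1), of "nsm l b"] e1 e2 by simp
        moreover have "((y + nsm l b) + nsm k a, z + nsm (k + l) a) \<in> r"
          using t[OF h(2), of "nsm k a"] e3 by simp
        ultimately show ?thesis unfolding ext_rel_def using tr by blast
      qed
    qed
  next
    fix x y z assume "(x, y) \<in> ext_rel r a b"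
    then show "(x + z, y + z) \<in> ext_rel r a b"
      unfolding ext_rel_def
    proof (elim UnE CollectE case_prodE exE)
      fix k u v assume "(x, y) = (u, v)" "(u + nsm k b, v + nsm k a) \<in> r"
      then have "((x + nsm k b) + z, (y + nsm k a) + z) \<in> r" using t[of "x + nsm k b" "y + nsm k a" z] by simp
      then show "(x + z, y + z) \<in> {(x, y). \<exists>k. (x + nsm k b, y + nsm k a) \<in> r} \<union> {(x, y). \<exists>k. x + nsm (Suc k) b = y + nsm (Suc k) a}"
        by (auto simp: ac_simps)
    next
      fix k u v assume "(x, y) = (u, v)" "u + nsm (Suc k) b = v + nsm (Suc k) a"
      then have "(x + nsm (Suc k) b) + z = (y + nsm (Suc k) a) + z" by simp
      then show "(x + z, y + z) \<in> {(x, y). \<exists>k. (x + nsm k b, y + nsm k a) \<in> r} \<union> {(x, y). \<exists>k. x + nsm (Suc k) b = y + nsm (Suc k) a}"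
        by (auto simp: ac_simps)
    qed
  next
    fix x y z assume "(x + z, y + z) \<in> ext_rel r a b"
    then show "(x, y) \<in> ext_rel r a b"
      unfolding ext_rel_def
    proof (elim UnE CollectE case_prodE exE)
      fix k u v assume "(x + z, y + z) = (u, v)" "(u + nsm k b, v + nsm k a) \<in> r"
      then have "((x + z) + nsm k b, (y + z) + nsm k a) \<in> r" by auto
      then have "((x + nsm k b) + z, (y + nsm k a) + z) \<in> r" by (simp add: ac_simps)
      then have "(x + nsm k b, y + nsm k a) \<in> r" by (rule c)
      then show "(x, y) \<in> {(x, y). \<exists>k. (x + nsm k b, y + nsm k a) \<in> r} \<union> {(x, y). \<exists>k. x + nsm (Suc k) b = y + nsm (Suc k) a}"
        by auto
    next
      fix k u v assume "(x + z, y + z) = (u, v)" "u + nsm (Suc k) b = v + nsm (Suc k) a"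
      then have "(x + z) + nsm (Suc k) b = (y + z) + nsm (Suc k) a" by auto
      then have "(x + nsm (Suc k) b) + z = (y + nsm (Suc k) a) + z" by (simp add: ac_simps)
      then have "x + nsm (Suc k) b = y + nsm (Suc k) a" by (rule canc)
      then show "(x, y) \<in> {(x, y). \<exists>k. (x + nsm k b, y + nsm k a) \<in> r} \<union> {(x, y). \<exists>k. x + nsm (Suc k) b = y + nsm (Suc k) a}"
        by auto
    qed
  qed
qed

lemma ext_contains: "r \<subseteq> ext_rel r a b" "(a, b) \<in> ext_rel r a b"
proof -
  show "r \<subseteq> ext_rel r a b" unfolding ext_rel_def by (auto intro: exI[of _ 0])
  have "a + nsm (Suc 0) b = b + nsm (Suc 0) a" by (simp add: add.commute)
  then show "(a, b) \<in> ext_rel r a b" unfolding ext_rel_def by blast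
qed

lemma total_order_exists: "\<exists>r::('m \<times> 'm) set. good r \<and> (\<forall>a b. a \<noteq> b \<longrightarrow> (a, b) \<in> r \<or> (b, a) \<in> r)"
proof -
  obtain r :: "('m \<times> 'm) set" where g: "good r" and mx: "\<And>r'. good r' \<Longrightarrow> r \<subseteq> r' \<Longrightarrow> r' = r"
    using good_exists_max by blast
  have "a \<noteq> b \<longrightarrow> (a, b) \<in> r \<or> (b, a) \<in> r" for a b
  proof (intro impI, rule ccontr)
    assume ab: "a \<noteq> b" and n: "\<not> ((a, b) \<in> r \<or> (b, a) \<in> r)"
    have irr: "\<And>x. (x, x) \<notin> r" and tr: "\<And>x y z. (x, y) \<in> r \<Longrightarrow> (y, z) \<in> r \<Longrightarrow> (x, z) \<in> r"
      using g unfolding good_def trans_def by blast+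
    have A: "\<exists>k. (nsm (Suc k) b, nsm (Suc k) a) \<in> r"
    proof (rule ccontr)
      assume "\<not> ?thesis"
      from ext_good[OF g this ab] mx ext_contains[where r=r and a=a and b=b] n show False by blast
    qed
    have B: "\<exists>k. (nsm (Suc k) a, nsm (Suc k) b) \<in> r"
    proof (rule ccontr)
      assume "\<not> ?thesis"
      from ext_good[OF g this ab[symmetric]] mx ext_contains[where r=r and a=b and b=a] n show False by blast
    qed
    obtain k where k: "(nsm (Suc k) b, nsm (Suc k) a) \<in> r" using A by blast
    obtain l where l: "(nsm (Suc l) a, nsm (Suc l) b) \<in> r" using B by blast
    have nn: "nsm (Suc m) (nsm (Suc k') x) = nsm (Suc k') (nsm (Suc m) x)" for m k' and x :: 'm
    proof -
      have "\<And>p q. nsm p (nsm q x) = nsm (p * q) x"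
      proof -
        fix p q show "nsm p (nsm q x) = nsm (p * q) x"
          by (induction p) (simp_all add: nsm_plus)
      qed
      then have "nsm (Suc m) (nsm (Suc k') x) = nsm (Suc m * Suc k') x"
        "nsm (Suc k') (nsm (Suc m) x) = nsm (Suc k' * Suc m) x" by blast+
      moreover have "nsm (Suc m * Suc k') x = nsm (Suc k' * Suc m) x"
        by (rule arg_cong[where f="\<lambda>t. nsm t x"]) (rule mult.commute)
      ultimately show ?thesis by simp
    qed
    have "(nsm (Suc l) (nsm (Suc k) b), nsm (Suc l) (nsm (Suc k) a)) \<in> r" using good_scale[OF g k] .
    moreover have "(nsm (Suc k) (nsm (Suc l) a), nsm (Suc k) (nsm (Suc l) b)) \<in> r" using good_scale[OF g l] .
    ultimately have "(nsm (Suc l) (nsm (Suc k) b), nsm (Suc l) (nsm (Suc k) b)) \<in> r"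
      using tr nn by metis
    then show False using irr by blast
  qed
  then show ?thesis using g by blast
qed

end

section \<open>No zero divisors\<close>

lemma max_exists:
  assumes irr: "\<And>x. (x, x) \<notin> r" and tr: "trans r" and tot: "\<And>a b. a \<noteq> b \<Longrightarrow> (a, b) \<in> r \<or> (b, a) \<in> r"
  shows "finite S \<Longrightarrow> S \<noteq> {} \<Longrightarrow> \<exists>m\<in>S. \<forall>x\<in>S. x \<noteq> m \<longrightarrow> (x, m) \<in> r"
proof (induction S rule: finite_ne_induct)
  case (singleton x) then show ?case by auto
next
  case (insert x F)
  then obtain m where m: "m \<in> F" "\<forall>x\<in>F. x \<noteq> m \<longrightarrow> (x, m) \<in> r" by blast
  show ?case
  proof (cases "(m, x) \<in> r")
    case True
    then show ?thesis using m tr irr unfolding trans_def by (metis insert_iff)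
  next
    case False
    then have "x \<noteq> m \<Longrightarrow> (x, m) \<in> r" using tot by blast
    then show ?thesis using m by auto
  qed
qed

lemma no_zero_div_order:
  fixes f g :: "'m::comm_monoid_add \<Rightarrow>\<^sub>0 int" and r :: "('m \<times> 'm) set"
  assumes g: "good r" and tot: "\<And>a b. a \<noteq> b \<Longrightarrow> (a, b) \<in> r \<or> (b, a) \<in> r"
    and canc: "\<And>a b c :: 'm. a + c = b + c \<Longrightarrow> a = b"
    and f0: "f \<noteq> 0" and g0: "g \<noteq> 0"
  shows "f * g \<noteq> 0"
proof -
  have irr: "\<And>x. (x, x) \<notin> r" and tr: "trans r" and t: "\<And>x y z. (x, y) \<in> r \<Longrightarrow> (x + z, y + z) \<in> r"
    using g unfolding good_def by blast+
  define F where "F = {a::'m. poly_mapping.lookup f a \<noteq> (0::int)}"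
  define G where "G = {a::'m. poly_mapping.lookup g a \<noteq> (0::int)}"
  have fF: "finite F" "finite G" using finite_lookup[of f] finite_lookup[of g] unfolding F_def G_def by auto
  have neF: "F \<noteq> {}" using f0 unfolding F_def by (metis (mono_tags) Collect_empty_eq lookup_zero poly_mapping_eqI)
  have neG: "G \<noteq> {}" using g0 unfolding G_def by (metis (mono_tags) Collect_empty_eq lookup_zero poly_mapping_eqI)
  obtain mf where mf: "mf \<in> F" "\<forall>x\<in>F. x \<noteq> mf \<longrightarrow> (x, mf) \<in> r"
    using max_exists[OF irr tr tot fF(1) neF] by blast
  obtain mg where mg: "mg \<in> G" "\<forall>x\<in>G. x \<noteq> mg \<longrightarrow> (x, mg) \<in> r"
    using max_exists[OF irr tr tot fF(2) neG] by blast
  have uniq: "a = mf \<and> b = mg" if "a \<in> F" "b \<in> G" "mf + mg = a + b" for a b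
  proof -
    have le1: "(a + b, mf + b) \<in> r \<or> a = mf" using mf that(1) t by blast
    have le2: "(mf + b, mf + mg) \<in> r \<or> b = mg" using mg that(2) t[of b mg mf] by (auto simp: add.commute)
    have "a = mf"
    proof (rule ccontr)
      assume "a \<noteq> mf"
      with le1 have "(a + b, mf + b) \<in> r" by blast
      with le2 have "(a + b, mf + mg) \<in> r" using tr unfolding trans_def by blast
      then show False using that(3) irr by simp
    qed
    moreover have "b = mg"
    proof -
      have "mg + mf = b + mf" using that(3) \<open>a = mf\<close> by (simp add: add.commute)
      from canc[OF this] show ?thesis by simp
    qed
    ultimately show ?thesis by blast
  qed
  define q where "q = mf + mg"
  have "poly_mapping.lookup (f * g) q = (\<Sum>(a, b). poly_mapping.lookup f a * poly_mapping.lookup g b when q = a + b)"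
    using prod_fun_unfold_prod[of "poly_mapping.lookup f" "poly_mapping.lookup g" q, OF fF[unfolded F_def G_def]] by (simp add: times_poly_mapping.rep_eq)
  also have "\<dots> = (\<Sum>ab. if ab = (mf, mg) then poly_mapping.lookup f mf * poly_mapping.lookup g mg else 0)"
  proof (rule Sum_any.cong)
    fix ab :: "'m \<times> 'm"
    obtain a b where ab: "ab = (a, b)" by (cases ab)
    show "(case ab of (a, b) \<Rightarrow> poly_mapping.lookup f a * poly_mapping.lookup g b when q = a + b) =
          (if ab = (mf, mg) then poly_mapping.lookup f mf * poly_mapping.lookup g mg else 0)"
    proof (cases "poly_mapping.lookup f a \<noteq> 0 \<and> poly_mapping.lookup g b \<noteq> 0 \<and> q = a + b")
      case True
      then have "a = mf \<and> b = mg" using uniq[of a b] unfolding F_def G_def q_def by auto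
      then show ?thesis using ab by (simp add: q_def)
    next
      case False
      then show ?thesis using ab by (auto simp: when_def q_def)
    qed
  qed
  also have "\<dots> = poly_mapping.lookup f mf * poly_mapping.lookup g mg" by simp
  also have "\<dots> \<noteq> 0" using mf(1) mg(1) unfolding F_def G_def by simp
  finally show ?thesis by (metis lookup_zero)
qed


lemma mult_canc: "(a::'p::semifield mult) + c = b + c \<Longrightarrow> a = b"
proof (cases a, cases b, cases c)
  fix x y z assume abc: "a = Mult x" "b = Mult y" "c = Mult z" and e: "a + c = b + c"
  then have "z * x = z * y" using e by (simp add: mult.commute)
  then show "a = b" using abc sf_cancel by blast
qed

lemma mult_nsm: "nsm k (Mult (a::'p::semifield)) = Mult (a ^ k)"
  by (induction k) (simp_all add: zero_mult_def)

lemma mult_tf: "nsm (Suc k) (a::'p::semifield mult) = nsm (Suc k) b \<Longrightarrow> a = b"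
proof (cases a, cases b)
  fix x y assume ab: "a = Mult x" "b = Mult y" and e: "nsm (Suc k) a = nsm (Suc k) b"
  then have "x ^ Suc k = y ^ Suc k" by (simp only: mult_nsm) simp
  then show "a = b" using ab sf_pow_inj by blast
qed

lemma pm_nsm: "poly_mapping.lookup (nsm k (m::nat \<Rightarrow>\<^sub>0 nat)) i = k * poly_mapping.lookup m i"
  by (induction k) (simp_all add: lookup_add)

lemma pm_canc: "(a::nat \<Rightarrow>\<^sub>0 nat) + c = b + c \<Longrightarrow> a = b"
proof (rule poly_mapping_eqI)
  fix i assume "a + c = b + c"
  then have "poly_mapping.lookup (a + c) i = poly_mapping.lookup (b + c) i" by simp
  then show "poly_mapping.lookup a i = poly_mapping.lookup b i" by (simp add: lookup_add)
qed

lemma pm_tf: "nsm (Suc k) (a::nat \<Rightarrow>\<^sub>0 nat) = nsm (Suc k) b \<Longrightarrow> a = b"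
proof (rule poly_mapping_eqI)
  fix i assume "nsm (Suc k) a = nsm (Suc k) b"
  then have "poly_mapping.lookup (nsm (Suc k) a) i = poly_mapping.lookup (nsm (Suc k) b) i" by simp
  then show "poly_mapping.lookup a i = poly_mapping.lookup b i" by (simp only: pm_nsm mult_cancel1) simp
qed

lemma prod_nsm: "nsm k (x::'a::comm_monoid_add \<times> 'b::comm_monoid_add) = (nsm k (fst x), nsm k (snd x))"
  by (induction k) (simp_all add: prod_eq_iff)

lemma M_canc: "(a::'p::semifield mult \<times> (nat \<Rightarrow>\<^sub>0 nat)) + c = b + c \<Longrightarrow> a = b"
  by (simp add: prod_eq_iff mult_canc pm_canc) (metis mult_canc pm_canc)

lemma M_tf: "nsm (Suc k) (a::'p::semifield mult \<times> (nat \<Rightarrow>\<^sub>0 nat)) = nsm (Suc k) b \<Longrightarrow> a = b"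
  by (simp only: prod_nsm prod_eq_iff fst_conv snd_conv) (metis mult_tf pm_tf)

lemma M_total: "\<exists>r::(('p::semifield mult \<times> (nat \<Rightarrow>\<^sub>0 nat)) \<times> ('p mult \<times> (nat \<Rightarrow>\<^sub>0 nat))) set.
   good r \<and> (\<forall>a b. a \<noteq> b \<longrightarrow> (a, b) \<in> r \<or> (b, a) \<in> r)"
proof (rule ctf.total_order_exists)
  show "ctf TYPE('p mult \<times> (nat \<Rightarrow>\<^sub>0 nat))"
    by (unfold_locales) (fact M_canc, fact M_tf)
qed

lemma ZPy_domain: "(f::'p::semifield ZPy) \<noteq> 0 \<Longrightarrow> g \<noteq> 0 \<Longrightarrow> f * g \<noteq> 0"
proof -
  assume f0: "f \<noteq> 0" and g0: "g \<noteq> 0"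
  obtain r :: "(('p mult \<times> (nat \<Rightarrow>\<^sub>0 nat)) \<times> ('p mult \<times> (nat \<Rightarrow>\<^sub>0 nat))) set"
    where r: "good r" "\<And>a b. a \<noteq> b \<Longrightarrow> (a, b) \<in> r \<or> (b, a) \<in> r" using M_total by blast
  show ?thesis by (rule no_zero_div_order[OF r(1) r(2) M_canc f0 g0])
qed


definition pos :: "'p::semifield ZPy \<Rightarrow> bool" where
  "pos f \<longleftrightarrow> f \<noteq> 0 \<and> (\<forall>k. poly_mapping.lookup f k \<ge> 0)"

definition PP :: "'p::semifield QPy \<Rightarrow> bool" where
  "PP u \<longleftrightarrow> pos (fst u) \<and> pos (snd u)"

definition qrel :: "'p::semifield QPy \<Rightarrow> 'p QPy \<Rightarrow> bool" where
  "qrel u w \<longleftrightarrow> PP u \<and> PP w \<and> fst u * snd w = fst w * snd u"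

lemma Sum_any_nonneg: "(\<And>x. g x \<ge> (0::int)) \<Longrightarrow> Sum_any g \<ge> 0"
  by (simp add: Sum_any.expand_set sum_nonneg)

lemma pos_mult: "pos f \<Longrightarrow> pos g \<Longrightarrow> pos (f * g)"
  unfolding pos_def
proof (intro conjI allI)
  assume f: "f \<noteq> 0 \<and> (\<forall>k. 0 \<le> poly_mapping.lookup f k)" and g: "g \<noteq> 0 \<and> (\<forall>k. 0 \<le> poly_mapping.lookup g k)"
  show "f * g \<noteq> 0" using ZPy_domain f g by blast
  fix k
  show "0 \<le> poly_mapping.lookup (f * g) k"
    unfolding times_poly_mapping.rep_eq prod_fun_def
    by (intro Sum_any_nonneg mult_nonneg_nonneg) (use f g in \<open>auto simp: when_def\<close>)
qed

lemma pos_add: "pos f \<Longrightarrow> pos g \<Longrightarrow> pos (f + g)"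
  unfolding pos_def
proof (intro conjI allI)
  assume f: "f \<noteq> 0 \<and> (\<forall>k. 0 \<le> poly_mapping.lookup f k)" and g: "g \<noteq> 0 \<and> (\<forall>k. 0 \<le> poly_mapping.lookup g k)"
  obtain k where "poly_mapping.lookup f k \<noteq> 0" using f poly_mapping_eqI[of f 0] by auto
  moreover have "0 \<le> poly_mapping.lookup f k" "0 \<le> poly_mapping.lookup g k" using f g by blast+
  ultimately have "poly_mapping.lookup (f + g) k > 0" by (simp add: lookup_add)
  then show "f + g \<noteq> 0" by auto
  fix k show "0 \<le> poly_mapping.lookup (f + g) k" using f g by (metis add_nonneg_nonneg lookup_add)
qed

lemma pos_one: "pos (1::'p::semifield ZPy)"
  unfolding pos_def by (simp add: lookup_one when_def)

lemma pos_single: "pos (Poly_Mapping.single k (1::int))"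
  unfolding pos_def
proof (intro conjI allI)
  show "Poly_Mapping.single k (1::int) \<noteq> 0" by (metis lookup_single_eq zero_neq_one lookup_zero)
  fix k' show "0 \<le> poly_mapping.lookup (Poly_Mapping.single k (1::int)) k'"
    by (simp add: lookup_single when_def)
qed

lemma canc_ZPy: "(c::'p::semifield ZPy) \<noteq> 0 \<Longrightarrow> c * x = c * y \<Longrightarrow> x = y"
proof -
  assume c: "c \<noteq> 0" and e: "c * x = c * y"
  have "c * (x - y) = c * x - c * y" by (rule right_diff_distrib)
  with e have "c * (x - y) = 0" by simp
  then have "x - y = 0" using ZPy_domain c by blast
  then show "x = y" by simp
qed

lemma qrel_part_equivp: "part_equivp (qrel :: 'p::semifield QPy \<Rightarrow> 'p QPy \<Rightarrow> bool)"
proof (rule part_equivpI)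
  show "\<exists>x::'p QPy. qrel x x" by (rule exI[of _ "(1, 1)"]) (simp add: qrel_def PP_def pos_one)
  show "symp (qrel :: 'p QPy \<Rightarrow> _)" by (rule sympI) (auto simp: qrel_def)
  show "transp (qrel :: 'p QPy \<Rightarrow> _)"
  proof (rule transpI)
    fix u v w :: "'p QPy" assume uv: "qrel u v" and vw: "qrel v w"
    have v2: "snd v \<noteq> 0" using uv unfolding qrel_def PP_def pos_def by blast
    have "snd v * (fst u * snd w) = (fst u * snd v) * snd w" by (simp add: ac_simps)
    also have "\<dots> = (fst v * snd u) * snd w" using uv unfolding qrel_def by simp
    also have "\<dots> = (fst v * snd w) * snd u" by (simp add: ac_simps)
    also have "\<dots> = (fst w * snd v) * snd u" using vw unfolding qrel_def by simp
    also have "\<dots> = snd v * (fst w * snd u)" by (simp add: ac_simps)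
    finally have "fst u * snd w = fst w * snd u" by (rule canc_ZPy[OF v2])
    then show "qrel u w" using uv vw unfolding qrel_def by blast
  qed
qed

quotient_type (overloaded) 'p QS = "'p::semifield QPy" / partial: qrel
  by (rule qrel_part_equivp)

definition qadd :: "'p::semifield QPy \<Rightarrow> 'p QPy \<Rightarrow> 'p QPy" where
  "qadd u w = (fst u * snd w + fst w * snd u, snd u * snd w)"
definition qmul :: "'p::semifield QPy \<Rightarrow> 'p QPy \<Rightarrow> 'p QPy" where
  "qmul u w = (fst u * fst w, snd u * snd w)"
definition qinv :: "'p::semifield QPy \<Rightarrow> 'p QPy" where
  "qinv u = (snd u, fst u)"

lemma PP_qadd: "PP u \<Longrightarrow> PP w \<Longrightarrow> PP (qadd u w)"
  unfolding PP_def qadd_def by (auto intro: pos_add pos_mult)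
lemma PP_qmul: "PP u \<Longrightarrow> PP w \<Longrightarrow> PP (qmul u w)"
  unfolding PP_def qmul_def by (auto intro: pos_mult)
lemma PP_qinv: "PP u \<Longrightarrow> PP (qinv u)"
  unfolding PP_def qinv_def by auto
lemma PP_one: "PP ((1, 1) :: 'p::semifield QPy)"
  unfolding PP_def by (simp add: pos_one)

lemma qrel_refl: "PP u \<Longrightarrow> qrel u u" by (simp add: qrel_def)

lemma r_add: "qrel u u' \<Longrightarrow> qrel w w' \<Longrightarrow> qrel (qadd u w) (qadd u' w')"
proof -
  assume uu: "qrel u u'" and ww: "qrel w w'"
  obtain a b where u: "u = (a, b)" by (cases u)
  obtain a' b' where u': "u' = (a', b')" by (cases u')
  obtain c d where w: "w = (c, d)" by (cases w)
  obtain c' d' where w': "w' = (c', d')" by (cases w')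
  have h1: "a * b' = a' * b" and h2: "c * d' = c' * d" using uu ww unfolding qrel_def u u' w w' by auto
  have "(a * d + c * b) * (b' * d') = (a * b') * (d * d') + (c * d') * (b * b')" by (simp add: algebra_simps)
  also have "\<dots> = (a' * b) * (d * d') + (c' * d) * (b * b')" by (simp only: h1 h2)
  also have "\<dots> = (a' * d' + c' * b') * (b * d)" by (simp add: algebra_simps)
  finally show ?thesis using uu ww unfolding qrel_def
    by (simp add: PP_qadd) (simp add: qadd_def u u' w w')
qed

lemma r_mul: "qrel u u' \<Longrightarrow> qrel w w' \<Longrightarrow> qrel (qmul u w) (qmul u' w')"
proof -
  assume uu: "qrel u u'" and ww: "qrel w w'"
  obtain a b where u: "u = (a, b)" by (cases u)
  obtain a' b' where u': "u' = (a', b')" by (cases u')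
  obtain c d where w: "w = (c, d)" by (cases w)
  obtain c' d' where w': "w' = (c', d')" by (cases w')
  have h1: "a * b' = a' * b" and h2: "c * d' = c' * d" using uu ww unfolding qrel_def u u' w w' by auto
  have "(a * c) * (b' * d') = (a * b') * (c * d')" by (simp add: algebra_simps)
  also have "\<dots> = (a' * b) * (c' * d)" by (simp only: h1 h2)
  also have "\<dots> = (a' * c') * (b * d)" by (simp add: algebra_simps)
  finally show ?thesis using uu ww unfolding qrel_def
    by (simp add: PP_qmul) (simp add: qmul_def u u' w w')
qed

lemma r_inv: "qrel u u' \<Longrightarrow> qrel (qinv u) (qinv u')"
  unfolding qrel_def qinv_def PP_def by (auto simp: mult.commute)

lemma r_pure: "PP u \<Longrightarrow> PP w \<Longrightarrow> fst u * snd w = fst w * snd u \<Longrightarrow> qrel u w"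
  by (simp add: qrel_def)

lemma raw_laws:
  assumes "PP a" "PP b" "PP c"
  shows "qrel (qadd (qadd a b) c) (qadd a (qadd b c))"
    "qrel (qadd a b) (qadd b a)"
    "qrel (qmul (qmul a b) c) (qmul a (qmul b c))"
    "qrel (qmul a b) (qmul b a)"
    "qrel (qmul (qadd a b) c) (qadd (qmul a c) (qmul b c))"
    "qrel (qmul (1, 1) a) a"
    "qrel (qmul a (qinv a)) (1, 1)"
  by (rule r_pure; ((intro PP_qadd PP_qmul PP_qinv PP_one assms; fail) | simp add: qadd_def qmul_def qinv_def algebra_simps))+

instantiation QS :: (semifield) semifield
begin

lift_definition one_QS :: "'a QS" is "(1, 1)" by (simp add: qrel_refl PP_one)
lift_definition plus_QS :: "'a QS \<Rightarrow> 'a QS \<Rightarrow> 'a QS" is qadd by (rule r_add)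
lift_definition times_QS :: "'a QS \<Rightarrow> 'a QS \<Rightarrow> 'a QS" is qmul by (rule r_mul)
lift_definition inverse_QS :: "'a QS \<Rightarrow> 'a QS" is qinv by (rule r_inv)
definition divide_QS :: "'a QS \<Rightarrow> 'a QS \<Rightarrow> 'a QS" where
  "divide_QS a b = a * inverse b"

instance
proof
  fix a b c :: "'a QS"
  show "a + b + c = a + (b + c)" by transfer (rule raw_laws; simp add: qrel_def)
  show "a + b = b + a" by transfer (rule raw_laws; simp add: qrel_def)
  show "a * b * c = a * (b * c)" by transfer (rule raw_laws; simp add: qrel_def)
  show "a * b = b * a" by transfer (rule raw_laws; simp add: qrel_def)
  show "(a + b) * c = a * c + b * c" by transfer (rule raw_laws; simp add: qrel_def)
  show "1 * a = a" by transfer (rule raw_laws; simp add: qrel_def)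
  show "a * inverse a = 1" by transfer (rule raw_laws; simp add: qrel_def)
  show "divide a b = a * inverse b" by (simp add: divide_QS_def)
qed

end


lemma S_ops_simps: "smul S_ops u w = qmul u w" "sadd S_ops u w = qadd u w" "sinv S_ops u = qinv u" "sone S_ops = (1, 1)"
  by (simp_all add: S_ops_def qmul_def qadd_def qinv_def split_beta)

lemma seval_S: "(\<And>v. PP (\<rho> v)) \<Longrightarrow>
   PP (seval S_ops \<rho> e) \<and> abs_QS (seval S_ops \<rho> e) = seval P_ops (\<lambda>v. abs_QS (\<rho> v)) e"
proof (induction e)
  case (V x) then show ?case by simp
next
  case One then show ?case by (simp add: S_ops_simps PP_one one_QS.abs_eq)
next
  case (Add e1 e2) then show ?case
    by (simp add: S_ops_simps PP_qadd plus_QS.abs_eq[symmetric] qrel_refl)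
next
  case (Mul e1 e2) then show ?case
    by (simp add: S_ops_simps PP_qmul times_QS.abs_eq[symmetric] qrel_refl)
next
  case (Inv e) then show ?case
    by (simp add: S_ops_simps PP_qinv inverse_QS.abs_eq[symmetric] qrel_refl)
qed

lemma spow_S: assumes "PP u" shows "PP (spow S_ops u m) \<and> abs_QS (spow S_ops u m) = zp (abs_QS u) m"
proof -
  have e: "spow S_ops u m = seval S_ops (\<lambda>_::unit. u) (spow E_ops (V ()) m)" by (simp add: seval_spowE)
  have "seval P_ops (\<lambda>_::unit. abs_QS u) (spow E_ops (V ()) m) = zp (abs_QS u) m" by (simp add: seval_spowE)
  then show ?thesis unfolding e using seval_S[of "\<lambda>_::unit. u" "spow E_ops (V ()) m"] assms by simp
qed

lemma sprod_S: assumes "\<And>i. PP (f i)" shows "PP (sprod S_ops n f) \<and> abs_QS (sprod S_ops n f) = (\<Prod>i<n. abs_QS (f i))"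
proof -
  have e: "sprod S_ops n f = seval S_ops f (sprod E_ops n V)" by (simp add: seval_sprodE)
  have "seval P_ops (\<lambda>i. abs_QS (f i)) (sprod E_ops n V) = (\<Prod>i<n. abs_QS (f i))" by (simp add: seval_sprodE)
  then show ?thesis unfolding e using seval_S[of f "sprod E_ops n V"] assms by simp
qed

lemma PP_embP: "PP (embP p)" by (simp add: PP_def embP_def pos_single pos_one)
lemma PP_yvar: "PP (yvar l)" by (simp add: PP_def yvar_def pos_single pos_one)

definition embQ :: "'p::semifield \<Rightarrow> 'p QS" where "embQ p = abs_QS (embP p)"
definition yQ :: "nat \<Rightarrow> 'p::semifield QS" where "yQ l = abs_QS (yvar l)"

lemma embQ_mult: "embQ (a * b) = embQ a * embQ b"
proof -
  have "qmul (embP a) (embP b) = embP (a * b)"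
    by (simp add: qmul_def embP_def mult_single)
  then show ?thesis unfolding embQ_def
    by (simp add: times_QS.abs_eq qrel_refl PP_embP)
qed

lemma embQ_one: "embQ 1 = (1 :: 'p::semifield QS)"
proof -
  have "embP (1::'p) = (1, 1)" by (simp add: embP_def zero_mult_def[symmetric] zero_prod_def[symmetric])
  then show ?thesis by (simp add: embQ_def one_QS.abs_eq)
qed

lemma embQ_inv: "embQ (inverse a) = inverse (embQ (a::'p::semifield))"
proof -
  have "embQ a * embQ (inverse a) = 1" by (simp add: embQ_mult[symmetric] semifield_right_inverse embQ_one)
  then show ?thesis by (rule sf_inv_unique[symmetric])
qed

lemma embQ_pow: "embQ (a ^ k) = embQ (a::'p::semifield) ^ k"
  by (induction k) (simp_all add: embQ_one embQ_mult)

lemma embQ_zp: "embQ (zp a m) = zp (embQ (a::'p::semifield)) m"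
  by (simp add: zp_def embQ_pow embQ_inv)

lemma embQ_prod: "embQ (\<Prod>i\<in>A. f i) = (\<Prod>i\<in>A. embQ (f i::'p::semifield))"
  by (induction A rule: infinite_finite_induct) (simp_all add: embQ_one embQ_mult)


lemma ycpat_snd: "snd (ycpat B0 p ks) = (fst (ypat P_ops B0 p ks), Bv B0 ks)"
proof (induction ks rule: rev_induct)
  case Nil then show ?case by (simp add: ycpat_def)
next
  case (snoc k ks)
  then show ?case by (simp add: ycpat_def split_beta ypat_fst_snoc Bv_snoc)
qed

lemma ycpat_fst_snoc: "fst (ycpat B0 p (ks @ [k])) =
   ycmut k (Bv B0 ks) (fst (ypat P_ops B0 p ks)) (fst (ycpat B0 p ks))"
proof -
  have "ycpat B0 p (ks @ [k]) = (\<lambda>(y, p, B) k. (ycmut k B p y, ymut P_ops k B p, mutB k B))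
      (ycpat B0 p ks) k" by (simp add: ycpat_def)
  then show ?thesis using ycpat_snd[of B0 p ks] by (simp add: split_beta)
qed

lemma abs_qmul: assumes "PP u" "PP w" shows "abs_QS (qmul u w) = abs_QS u * abs_QS w"
  using times_QS.abs_eq[OF qrel_refl[OF assms(1)] qrel_refl[OF assms(2)]] by (rule sym)
lemma abs_qadd: assumes "PP u" "PP w" shows "abs_QS (qadd u w) = abs_QS u + abs_QS w"
  using plus_QS.abs_eq[OF qrel_refl[OF assms(1)] qrel_refl[OF assms(2)]] by (rule sym)

lemma key_X:
  fixes u :: "'p::semifield QS" and Q :: 'p and b :: int
  assumes "b \<noteq> 0"
  shows "embQ (cbr P_ops Q b) + embQ (cbr P_ops Q (- b)) * zp (u * inverse (embQ Q)) (- sgn b)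
       = (1 + zp u (- sgn b)) * inverse (embQ (1 + zp Q (- sgn b)))"
proof -
  define R where "R = embQ (inverse (Q + 1))"
  define EQ where "EQ = embQ Q"
  have EQi: "EQ * inverse EQ = 1" by (rule semifield_right_inverse)
  show ?thesis
  proof (cases "b > 0")
    case True
    have "1 + inverse Q = (Q + 1) * inverse Q" by (simp add: distrib_right semifield_right_inverse)
    then have E1: "inverse (embQ (1 + inverse Q)) = R * EQ"
      by (simp add: embQ_mult embQ_inv sf_inv_mult R_def EQ_def mult.commute)
    have "embQ (cbr P_ops Q b) + embQ (cbr P_ops Q (- b)) * zp (u * inverse (embQ Q)) (- sgn b)
        = EQ * R + R * (inverse u * EQ)"
      using True by (simp add: cbr_P embQ_mult embQ_inv zp_neg sf_inv_mult R_def EQ_def)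
    also have "\<dots> = (1 + inverse u) * (R * EQ)" by (simp add: algebra_simps)
    finally show ?thesis using True E1 by (simp add: zp_neg)
  next
    case False
    with assms have b: "b < 0" by simp
    have "embQ (cbr P_ops Q b) + embQ (cbr P_ops Q (- b)) * zp (u * inverse (embQ Q)) (- sgn b)
        = R + (EQ * R) * (u * inverse EQ)"
      using b by (simp add: cbr_P embQ_mult embQ_inv R_def EQ_def)
    also have "(EQ * R) * (u * inverse EQ) = (EQ * inverse EQ) * (R * u)" by (simp add: ac_simps)
    also have "\<dots> = R * u" by (simp add: EQi)
    also have "R + R * u = (1 + u) * R" by (simp add: algebra_simps)
    finally show ?thesis using b by (simp add: R_def embQ_inv add.commute)
  qed
qed

lemma ytil: "\<forall>j. PP (fst (ycpat B0 p ks) j) \<and> abs_QS (fst (ycpat B0 p ks) j) =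
   fst (ypat P_ops B0 (\<lambda>l. embQ (p l) * yQ l) ks) j * inverse (embQ (fst (ypat P_ops B0 p ks) j))"
proof (induction ks rule: rev_induct)
  case Nil
  show ?case
  proof
    fix j
    have "embQ (p j) * yQ j * inverse (embQ (p j)) = yQ j"
      by (simp add: ac_simps semifield_right_inverse)
    then show "PP (fst (ycpat B0 p []) j) \<and> abs_QS (fst (ycpat B0 p []) j) =
      fst (ypat P_ops B0 (\<lambda>l. embQ (p l) * yQ l) []) j * inverse (embQ (fst (ypat P_ops B0 p []) j))"
      by (simp add: ycpat_def PP_yvar yQ_def)
  qed
next
  case (snoc k ks)
  define Yt where "Yt = fst (ycpat B0 p ks)"
  define q where "q = fst (ypat P_ops B0 p ks)"
  define U where "U = fst (ypat P_ops B0 (\<lambda>l. embQ (p l) * yQ l) ks)"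
  define B where "B = Bv B0 ks"
  have IH: "\<And>j. PP (Yt j)" "\<And>j. abs_QS (Yt j) = U j * inverse (embQ (q j))"
    using snoc.IH unfolding Yt_def q_def U_def by blast+
  have Yt': "fst (ycpat B0 p (ks @ [k])) = ycmut k B q Yt"
    unfolding ycpat_fst_snoc Yt_def q_def B_def ..
  have q': "fst (ypat P_ops B0 p (ks @ [k])) = ymut P_ops k B q" unfolding ypat_fst_snoc q_def B_def ..
  have U': "fst (ypat P_ops B0 (\<lambda>l. embQ (p l) * yQ l) (ks @ [k])) = ymut P_ops k B U"
    unfolding ypat_fst_snoc U_def B_def ..
  show ?case
  proof
    fix j
    show "PP (fst (ycpat B0 p (ks @ [k])) j) \<and> abs_QS (fst (ycpat B0 p (ks @ [k])) j) =
      fst (ypat P_ops B0 (\<lambda>l. embQ (p l) * yQ l) (ks @ [k])) j *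
      inverse (embQ (fst (ypat P_ops B0 p (ks @ [k])) j))"
    proof (cases "j = k")
      case True
      have "PP (qinv (Yt k))" using IH by (simp add: PP_qinv)
      moreover have "abs_QS (qinv (Yt k)) = inverse (abs_QS (Yt k))"
        by (simp add: inverse_QS.abs_eq qrel_refl IH(1))
      then have "abs_QS (qinv (Yt k)) = inverse (U k) * embQ (q k)"
        by (simp add: IH(2) sf_inv_mult)
      ultimately show ?thesis unfolding Yt' q' U' using True
        by (simp add: ycmut_def ymut_P S_ops_simps embQ_inv)
    next
      case False
      define b where "b = B k j"
      define s where "s = - sgn b"
      define Y1 where "Y1 = spow S_ops (Yt k) s"
      have Y1: "PP Y1" "abs_QS Y1 = zp (abs_QS (Yt k)) s" using spow_S[OF IH(1)] unfolding Y1_def by blast+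
      define Y2 where "Y2 = qmul (embP (cbr P_ops (q k) (- b))) Y1"
      have Y2: "PP Y2" "abs_QS Y2 = embQ (cbr P_ops (q k) (- b)) * zp (abs_QS (Yt k)) s"
        unfolding Y2_def using PP_qmul[OF PP_embP Y1(1)] abs_qmul[OF PP_embP Y1(1)] Y1(2) by (simp_all add: embQ_def)
      define Y3 where "Y3 = qadd (embP (cbr P_ops (q k) b)) Y2"
      have Y3: "PP Y3" "abs_QS Y3 = embQ (cbr P_ops (q k) b) + embQ (cbr P_ops (q k) (- b)) * zp (abs_QS (Yt k)) s"
        unfolding Y3_def using PP_qadd[OF PP_embP Y2(1)] abs_qadd[OF PP_embP Y2(1)] Y2(2) by (simp_all add: embQ_def)
      define Y4 where "Y4 = spow S_ops Y3 (- b)"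
      have Y4: "PP Y4" "abs_QS Y4 = zp (abs_QS Y3) (- b)" using spow_S[OF Y3(1)] unfolding Y4_def by blast+
      have raw: "fst (ycpat B0 p (ks @ [k])) j = qmul (Yt j) Y4"
        unfolding Yt' Y4_def Y3_def Y2_def Y1_def s_def b_def using False by (simp add: ycmut_def S_ops_simps)
      have PPr: "PP (fst (ycpat B0 p (ks @ [k])) j)" unfolding raw using IH(1) Y4(1) by (simp add: PP_qmul)
      have absr: "abs_QS (fst (ycpat B0 p (ks @ [k])) j) = abs_QS (Yt j) * abs_QS Y4"
        unfolding raw by (rule abs_qmul[OF IH(1) Y4(1)])
      have tgt: "fst (ypat P_ops B0 (\<lambda>l. embQ (p l) * yQ l) (ks @ [k])) j *
          inverse (embQ (fst (ypat P_ops B0 p (ks @ [k])) j))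
        = (U j * zp (1 + zp (U k) s) (- b)) * inverse (embQ (q j * zp (1 + zp (q k) s) (- b)))"
        unfolding U' q' using False by (simp add: ymut_P s_def b_def)
      show ?thesis
      proof (cases "b = 0")
        case True
        then show ?thesis using PPr absr tgt Y4 IH(2) by simp
      next
        case b0: False
        have X: "abs_QS Y3 = (1 + zp (U k) s) * inverse (embQ (1 + zp (q k) s))"
          unfolding Y3(2) IH(2) s_def by (rule key_X[OF b0])
        have "abs_QS (fst (ycpat B0 p (ks @ [k])) j) =
           (U j * inverse (embQ (q j))) * (zp (1 + zp (U k) s) (- b) * inverse (embQ (zp (1 + zp (q k) s) (- b))))"
          unfolding absr Y4(2) X IH(2) by (simp add: zp_mult_base zp_inv_base embQ_zp)
        also have "\<dots> = (U j * zp (1 + zp (U k) s) (- b)) * inverse (embQ (q j * zp (1 + zp (q k) s) (- b)))"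
          by (simp add: embQ_mult sf_inv_mult ac_simps)
        finally show ?thesis using PPr tgt by simp
      qed
    qed
  qed
qed


theorem mainTheorem2:
  fixes n :: nat and B0 :: "nat \<Rightarrow> nat \<Rightarrow> int" and p :: "nat \<Rightarrow> 'p::semifield"
    and ks :: "nat list" and j :: nat
  assumes "exchange_matrix n B0"
    and "tree_vertex n ks"
    and "j < n"
  shows "qeq (Ytilde B0 p ks j)
     (smul S_ops
        (embP (sprod P_ops n (\<lambda>i. seval P_ops p
                 (spow E_ops (Fpoly n B0 ks i) (- Bv B0 ks i j)))))
        (smul S_ops
           (sprod S_ops n (\<lambda>i. seval S_ops (\<lambda>l. smul S_ops (embP (p l)) (yvar l))
                 (spow E_ops (Fpoly n B0 ks i) (Bv B0 ks i j))))
           (sprod S_ops n (\<lambda>i. spow S_ops (yvar i) (cvec B0 ks j i)))))"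
proof -
  obtain d where ss: "ssym n d B0" using assms(1) unfolding exchange_matrix_def ssym_def by blast
  have ksn: "\<forall>k\<in>set ks. k < n" using assms(2) unfolding tree_vertex_def by blast
  define y' where "y' = (\<lambda>l. embQ (p l) * yQ l)"
  define bb where "bb = (\<lambda>i. Bv B0 ks i j)"
  define cc where "cc = (\<lambda>i. cvec B0 ks j i)"
  define \<rho> where "\<rho> = (\<lambda>l. smul S_ops (embP (p l)) (yvar l))"
  have PPrho: "\<And>l. PP (\<rho> l)" unfolding \<rho>_def S_ops_simps by (rule PP_qmul[OF PP_embP PP_yvar])
  have absrho: "(\<lambda>l. abs_QS (\<rho> l)) = y'"
    unfolding \<rho>_def y'_def S_ops_simps by (rule ext) (simp add: abs_qmul[OF PP_embP PP_yvar] embQ_def yQ_def)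
  define X where "X = sprod P_ops n (\<lambda>i. seval P_ops p (spow E_ops (Fpoly n B0 ks i) (- Bv B0 ks i j)))"
  have X: "X = (\<Prod>i<n. zp (Fv n B0 ks p i) (- bb i))"
    unfolding X_def bb_def by (simp add: seval_spowE Fpoly_Fv)
  define Ys where "Ys = sprod S_ops n (\<lambda>i. seval S_ops (\<lambda>l. smul S_ops (embP (p l)) (yvar l))
                 (spow E_ops (Fpoly n B0 ks i) (Bv B0 ks i j)))"
  have Ys_terms: "\<And>i. PP (seval S_ops \<rho> (spow E_ops (Fpoly n B0 ks i) (bb i))) \<and>
      abs_QS (seval S_ops \<rho> (spow E_ops (Fpoly n B0 ks i) (bb i))) = zp (Fv n B0 ks y' i) (bb i)"
  proof -
    fix i
    show "PP (seval S_ops \<rho> (spow E_ops (Fpoly n B0 ks i) (bb i))) \<and>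
      abs_QS (seval S_ops \<rho> (spow E_ops (Fpoly n B0 ks i) (bb i))) = zp (Fv n B0 ks y' i) (bb i)"
      using seval_S[where \<rho>=\<rho> and e="spow E_ops (Fpoly n B0 ks i) (bb i)", OF PPrho]
      unfolding absrho by (simp add: seval_spowE Fpoly_Fv)
  qed
  have Ys: "PP Ys" "abs_QS Ys = (\<Prod>i<n. zp (Fv n B0 ks y' i) (bb i))"
    using sprod_S[of "\<lambda>i. seval S_ops \<rho> (spow E_ops (Fpoly n B0 ks i) (bb i))" n] Ys_terms
    unfolding Ys_def \<rho>_def[symmetric] by (auto simp: bb_def)
  define Z :: "'p QPy" where "Z = sprod S_ops n (\<lambda>i. spow S_ops (yvar i) (cvec B0 ks j i))"
  have Zt: "\<And>i. PP (spow S_ops (yvar i) (cc i) :: 'p QPy)"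
    "\<And>i. abs_QS (spow S_ops (yvar i) (cc i) :: 'p QPy) = zp (yQ i) (cc i)"
    using spow_S[OF PP_yvar] unfolding yQ_def by blast+
  have Z: "PP Z" "abs_QS Z = (\<Prod>i<n. zp (yQ i) (cc i))"
    using sprod_S[of "\<lambda>i. spow S_ops (yvar i) (cc i)" n, OF Zt(1)] Zt(2)
    unfolding Z_def cc_def by simp_all
  define R where "R = smul S_ops (embP X) (smul S_ops Ys Z)"
  have R: "PP R" "abs_QS R = embQ X * (abs_QS Ys * abs_QS Z)"
    unfolding R_def S_ops_simps
    using PP_qmul[OF PP_embP PP_qmul[OF Ys(1) Z(1)]] abs_qmul[OF PP_embP PP_qmul[OF Ys(1) Z(1)]]
      abs_qmul[OF Ys(1) Z(1)] by (simp_all add: embQ_def)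
  define L where "L = Ytilde B0 p ks j"
  define U where "U = fst (ypat P_ops B0 y' ks)"
  define q where "q = fst (ypat P_ops B0 p ks)"
  have L: "PP L" "abs_QS L = U j * inverse (embQ (q j))"
    using ytil[of B0 p ks] unfolding L_def Ytilde_def U_def q_def y'_def by blast+
  have Uj: "U j = MM n y' (Fv n B0 ks y') cc bb"
    using sep_formula[OF ss ksn, of y'] assms(3) unfolding U_def cc_def bb_def by blast
  have qj: "q j = MM n p (Fv n B0 ks p) cc bb"
    using sep_formula[OF ss ksn, of p] assms(3) unfolding q_def cc_def bb_def by blast
  define Pc where "Pc = (\<Prod>i<n. zp (p i) (cc i))"
  define Fp where "Fp = (\<Prod>i<n. zp (Fv n B0 ks p i) (bb i))"
  have y'c: "(\<Prod>i<n. zp (y' i) (cc i)) = embQ Pc * abs_QS Z"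
    unfolding Z(2) Pc_def y'_def by (simp add: zp_mult_base prod.distrib embQ_prod embQ_zp)
  have U2: "U j = embQ Pc * abs_QS Z * abs_QS Ys"
    unfolding Uj MM_def y'c Ys(2) ..
  have q2: "inverse (embQ (q j)) = inverse (embQ Pc) * embQ X"
    unfolding qj MM_def Pc_def[symmetric] X
    by (simp add: embQ_mult sf_inv_mult prod_zp_neg embQ_inv)
  have EPc: "embQ Pc * inverse (embQ Pc) = 1" by (rule semifield_right_inverse)
  have "abs_QS L = (embQ Pc * inverse (embQ Pc)) * (embQ X * (abs_QS Ys * abs_QS Z))"
    unfolding L(2) U2 q2 by (simp add: ac_simps)
  then have "abs_QS L = abs_QS R" unfolding R(2) EPc by simp
  then have "qrel L R" using Quotient3_rel[OF Quotient3_QS, of L R] L(1) R(1) qrel_refl by blast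
  then show ?thesis unfolding qrel_def qeq_def L_def R_def X_def Ys_def Z_def by blast
qed


end
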